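(* Fix $\mu\in(0,\mu_0]$ and suppose there are constants $p\ge0$, $\rho>0$ with $|f(\xi)-f'(0)\xi|\le p|\xi|^2$ for all $|\xi|\le\rho$, and that $\mu\sup_{t\ge0}|\Delta\tilde\varphi(t)|<\frac{1}{8h_{\max}(\mu)}$ and $\mu(|\Delta\tilde\beta|\mu+|\Delta\alpha|)<\frac{1}{8h_{\max}(\mu)}$. Then the zero solution of $$\bar y''+(\alpha+\Delta\alpha)\mu\bar y'+\big((\beta+\Delta\beta)\mu^2+\mu(\varphi(t)+\Delta\varphi(t))\big)f(\bar y)=0$$ is asymptotically stable.
   Context: Let $T>0$, $\alpha>0$, $\beta>0$ be constants, $\varphi:\mathbb{R}\to\mathbb{R}$ a continuous $T$-periodic function with $\int_0^T\varphi(s)\,ds=0$, and $f:\mathbb{R}\to\mathbb{R}$ a smooth function with $f(0)=0$ and $f'(0)<0$. Put $\tilde\beta=\beta f'(0)$, $\tilde\varphi(t)=\varphi(t)f'(0)$, and assume $$\frac{1}{T}\int_0^T\Big(\int_0^\tau\tilde\varphi(s)\,ds\Big)^2d\tau>\Big(\frac{1}{T}\int_0^T\tau\,\tilde\varphi(\tau)\,d\tau\Big)^2-\tilde\beta .$$ For $\mu>0$ let $\tilde A(t,\mu)=\begin{pmatrix}0&1\\-\tilde\beta\mu^2-\mu\tilde\varphi(t)&-\alpha\mu\end{pmatrix}$. Let $\mu_0>0$ be a number such that the zero solution of the linear equation $y''+\alpha\mu y'+(\tilde\beta\mu^2+\mu\tilde\varphi(t))y=0$ is asymptotically stable for every $\mu\in(0,\mu_0]$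 (such a number exists). For fixed $\mu\in(0,\mu_0]$ let $H(t,\mu)$ be a Hermitian solution of $\frac{d}{dt}H+H\tilde A(t,\mu)+\tilde A^*(t,\mu)H=-I$ on $[0,T]$ with $H(0,\mu)=H(T,\mu)>0$, extended $T$-periodically to $[0,\infty)$; $h_{\max}(\mu)=\max_{0\le t\le T}\|H(t,\mu)\|$. The perturbations are real constants $\Delta\alpha,\Delta\beta$ and a bounded continuous function $\Delta\varphi$ on $[0,\infty)$; set $\Delta\tilde\beta=\Delta\beta\,f'(0)$, $\Delta\tilde\varphi(t)=\Delta\varphi(t)f'(0)$. $\|\cdot\|$ is the Euclidean norm / spectral matrix norm. Asymptotic stability is in the Lyapunov sense for the equivalent first-order system in $(\bar y,\bar y')$. *)

theory Defs
  imports "HOL-Analysis.Analysis"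
begin

definition is_solution_on ::
  "(real \<Rightarrow> real \<times> real \<Rightarrow> real \<times> real) \<Rightarrow> real set \<Rightarrow> (real \<Rightarrow> real \<times> real) \<Rightarrow> bool" where
  "is_solution_on F S x \<longleftrightarrow>
     (\<forall>t\<in>S. (x has_vector_derivative F t (x t)) (at t within S))"

definition lyap_stable :: "(real \<Rightarrow> real \<times> real \<Rightarrow> real \<times> real) \<Rightarrow> bool" where
  "lyap_stable F \<longleftrightarrow>
     (\<forall>\<epsilon>>0. \<forall>t0\<ge>0. \<exists>\<delta>>0. \<forall>x0. norm x0 < \<delta> \<longrightarrow>
        (\<exists>x. is_solution_on F {t0..} x \<and> x t0 = x0) \<and>
        (\<forall>b x. t0 \<le> b \<longrightarrow> is_solution_on F {t0..b} x \<longrightarrow> x t0 = x0 \<longrightarrow>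
               (\<forall>t\<in>{t0..b}. norm (x t) < \<epsilon>)))"

definition lyap_attractive :: "(real \<Rightarrow> real \<times> real \<Rightarrow> real \<times> real) \<Rightarrow> bool" where
  "lyap_attractive F \<longleftrightarrow>
     (\<forall>t0\<ge>0. \<exists>\<delta>>0. \<forall>x. is_solution_on F {t0..} x \<longrightarrow> norm (x t0) < \<delta> \<longrightarrow>
        (x \<longlongrightarrow> 0) at_top)"

definition asymp_stable :: "(real \<Rightarrow> real \<times> real \<Rightarrow> real \<times> real) \<Rightarrow> bool" where
  "asymp_stable F \<longleftrightarrow> lyap_stable F \<and> lyap_attractive F"

text \<open>The system for y'' + a y' + g(t) k(y) = 0.\<close>
definition second_order_sys ::
  "real \<Rightarrow> (real \<Rightarrow> real) \<Rightarrow> (real \<Rightarrow> real) \<Rightarrow> real \<Rightarrow> real \<times> real \<Rightarrow> real \<times> real" where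
  "second_order_sys a g k t z = (snd z, - a * snd z - g t * k (fst z))"

definition adjoint2 :: "complex^2^2 \<Rightarrow> complex^2^2" where
  "adjoint2 A = (\<chi> i j. cnj (A $ j $ i))"

definition hermitian2 :: "complex^2^2 \<Rightarrow> bool" where
  "hermitian2 H \<longleftrightarrow> adjoint2 H = H"

definition posdef2 :: "complex^2^2 \<Rightarrow> bool" where
  "posdef2 H \<longleftrightarrow> hermitian2 H \<and>
     (\<forall>v::complex^2. v \<noteq> 0 \<longrightarrow> 0 < Re (\<Sum>i\<in>UNIV. cnj (v $ i) * (H *v v) $ i))"

text \<open>The matrix tilde A(t,mu), with tilde beta = bt, tilde phi = pt.\<close>
definition Atilde :: "real \<Rightarrow> real \<Rightarrow> (real \<Rightarrow> real) \<Rightarrow> real \<Rightarrow> real \<Rightarrow> complex^2^2" where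
  "Atilde \<alpha> bt pt \<mu> t = vector [vector [0, 1],
       vector [complex_of_real (- bt * \<mu>^2 - \<mu> * pt t), complex_of_real (- \<alpha> * \<mu>)]]"

definition spec_norm :: "complex^2^2 \<Rightarrow> real" where
  "spec_norm A = onorm (\<lambda>v. A *v v)"

end

theory Submission
  imports Defs
begin

lemma cont_comp:
  fixes G :: "real \<Rightarrow> real\<times>real \<Rightarrow> real\<times>real"
  assumes cont: "\<And>z. continuous_on S (\<lambda>t. G t z)"
    and lip: "\<And>t z w. t \<in> S \<Longrightarrow> norm (G t z - G t w) \<le> K * norm (z - w)"
    and xc: "continuous_on S x"
  shows "continuous_on S (\<lambda>s. G s (x s))"
  unfolding continuous_on_def
proof
  fix s0 assume s0: "s0 \<in> S"
  have 1: "((\<lambda>s. G s (x s0)) \<longlongrightarrow> G s0 (x s0)) (at s0 within S)"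
    using cont[of "x s0"] s0 unfolding continuous_on_def by blast
  have xl: "(x \<longlongrightarrow> x s0) (at s0 within S)" using xc s0 unfolding continuous_on_def by blast
  have 2: "((\<lambda>s. G s (x s) - G s (x s0)) \<longlongrightarrow> 0) (at s0 within S)"
  proof (rule Lim_null_comparison)
    show "\<forall>\<^sub>F s in at s0 within S. norm (G s (x s) - G s (x s0)) \<le> K * norm (x s - x s0)"
      using lip by (auto simp: eventually_at_filter)
    have "((\<lambda>s. norm (x s - x s0)) \<longlongrightarrow> norm (x s0 - x s0)) (at s0 within S)"
      by (intro tendsto_intros xl)
    then show "((\<lambda>s. K * norm (x s - x s0)) \<longlongrightarrow> 0) (at s0 within S)"
      using tendsto_mult_left[of _ 0 _ K] by force
  qed
  have "((\<lambda>s. (G s (x s) - G s (x s0)) + G s (x s0)) \<longlongrightarrow> 0 + G s0 (x s0)) (at s0 within S)"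
    by (intro tendsto_add 1 2)
  then show "((\<lambda>s. G s (x s)) \<longlongrightarrow> G s0 (x s0)) (at s0 within S)" by simp
qed

fun picard :: "(real \<Rightarrow> real\<times>real \<Rightarrow> real\<times>real) \<Rightarrow> real \<Rightarrow> real\<times>real \<Rightarrow> nat \<Rightarrow> real \<Rightarrow> real\<times>real" where
  "picard G t0 x0 0 t = x0"
| "picard G t0 x0 (Suc n) t = x0 + integral {t0..t} (\<lambda>s. G s (picard G t0 x0 n s))"

lemma integral_pow_shift:
  assumes "t0 \<le> t"
  shows "((\<lambda>s. (s - t0)^k) has_integral (t - t0)^(Suc k) / real (Suc k)) {t0..t}"
proof -
  have "((\<lambda>s. (s - t0)^k) has_integral ((\<lambda>s. (s-t0)^(Suc k) / real (Suc k)) t - (\<lambda>s. (s-t0)^(Suc k) / real (Suc k)) t0)) {t0..t}"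
  proof (rule fundamental_theorem_of_calculus[OF assms])
    fix s assume "s \<in> {t0..t}"
    show "((\<lambda>s. (s-t0)^(Suc k) / real (Suc k)) has_vector_derivative (s - t0)^k) (at s within {t0..t})"
      unfolding has_real_derivative_iff_has_vector_derivative[symmetric]
      by (rule derivative_eq_intros refl | simp)+
  qed
  then show ?thesis by simp
qed

locale picard_setup =
  fixes G :: "real \<Rightarrow> real\<times>real \<Rightarrow> real\<times>real" and t0 K B :: real and x0 :: "real\<times>real"
  assumes K: "K > 0" and B: "B \<ge> 0"
    and cont: "\<And>z. continuous_on {t0..} (\<lambda>t. G t z)"
    and lip: "\<And>t z w. t \<ge> t0 \<Longrightarrow> norm (G t z - G t w) \<le> K * norm (z - w)"
    and bnd: "\<And>t z. t \<ge> t0 \<Longrightarrow> norm (G t z) \<le> B"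
begin

abbreviation "P \<equiv> picard G t0 x0"

lemma contb: "continuous_on {t0..b} (\<lambda>s. G s (x s))" if "continuous_on {t0..b} x" for x b
  by (rule cont_comp[OF continuous_on_subset[OF cont] _ that, of _ K]) (auto intro: lip)

lemma P_cont: "continuous_on {t0..b} (P n)"
proof (induction n)
  case 0 then show ?case by simp
next
  case (Suc n)
  have "continuous_on {t0..b} (\<lambda>t. integral {t0..t} (\<lambda>s. G s (P n s)))"
    by (rule indefinite_integral_continuous_1 integrable_continuous_real contb Suc)+
  then show ?case by (simp add: continuous_on_add)
qed

lemma int_G: "(\<lambda>s. G s (P n s)) integrable_on {t0..t}"
  by (rule integrable_continuous_real contb P_cont)+

lemma P_diff: "t0 \<le> t \<Longrightarrow> norm (P (Suc n) t - P n t) \<le> B * K^n * (t - t0)^(Suc n) / fact (Suc n)"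
proof (induction n arbitrary: t)
  case 0
  have "norm (integral {t0..t} (\<lambda>s. G s x0)) \<le> integral {t0..t} (\<lambda>s. B)"
    by (rule integral_norm_bound_integral) (use int_G[of 0 t] bnd in auto)
  then show ?case using 0 by (simp add: mult.commute)
next
  case (Suc n)
  have eq: "P (Suc (Suc n)) t - P (Suc n) t = integral {t0..t} (\<lambda>s. G s (P (Suc n) s) - G s (P n s))"
    by (simp add: integral_diff int_G[of "Suc n", simplified] int_G[of n])
  have hi: "((\<lambda>s. K * (B * K^n / fact (Suc n)) * (s - t0)^(Suc n)) has_integral
      K * (B * K^n / fact (Suc n)) * ((t - t0)^(Suc (Suc n)) / real (Suc (Suc n)))) {t0..t}"
    by (intro has_integral_mult_right integral_pow_shift Suc.prems)
  have "norm (integral {t0..t} (\<lambda>s. G s (P (Suc n) s) - G s (P n s)))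
      \<le> integral {t0..t} (\<lambda>s. K * (B * K^n / fact (Suc n)) * (s - t0)^(Suc n))"
  proof (rule integral_norm_bound_integral)
    show "(\<lambda>s. G s (P (Suc n) s) - G s (P n s)) integrable_on {t0..t}"
      using int_G[of "Suc n"] int_G[of n] by (intro integrable_diff) auto
    show "(\<lambda>s. K * (B * K^n / fact (Suc n)) * (s - t0)^(Suc n)) integrable_on {t0..t}"
      using hi by blast
    fix s assume s: "s \<in> {t0..t}"
    have "norm (G s (P (Suc n) s) - G s (P n s)) \<le> K * norm (P (Suc n) s - P n s)"
      using lip s by auto
    also have "\<dots> \<le> K * (B * K ^ n * (s - t0) ^ Suc n / fact (Suc n))"
      using Suc.IH[of s] s K by (intro mult_left_mono) auto
    finally show "norm (G s (P (Suc n) s) - G s (P n s)) \<le> K * (B * K^n / fact (Suc n)) * (s - t0)^(Suc n)"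
      by simp
  qed
  also have "\<dots> = K * (B * K^n / fact (Suc n)) * ((t - t0)^(Suc (Suc n)) / real (Suc (Suc n)))"
    by (rule integral_unique[OF hi])
  also have "\<dots> = B * K ^ Suc n * (t - t0) ^ Suc (Suc n) / fact (Suc (Suc n))"
    by (simp add: field_simps)
  finally show ?case using eq by simp
qed

definition "d k t = P (Suc k) t - P k t"
definition "X t = x0 + (\<Sum>k. d k t)"

lemma P_sum: "P n t = x0 + (\<Sum>k<n. d k t)"
proof (induction n)
  case (Suc n) then show ?case by (simp add: d_def algebra_simps del: picard.simps)
qed simp

lemma M_summable: "summable (\<lambda>k. B * K^k * L^(Suc k) / fact (Suc k))"
proof -
  have "summable (\<lambda>k. inverse (fact k) * (K*L)^k)" by (rule summable_exp)
  from summable_ignore_initial_segment[OF this, of 1]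
  have "summable (\<lambda>k. inverse (fact (Suc k)) * (K*L)^(Suc k))" by simp
  then have "summable (\<lambda>k. (B / K) * (inverse (fact (Suc k)) * (K*L)^(Suc k)))"
    by (rule summable_mult)
  moreover have "(B / K) * (inverse (fact (Suc k)) * (K*L)^(Suc k)) = B * K^k * L^(Suc k) / fact (Suc k)" for k
    using K by (simp add: field_simps power_mult_distrib)
  ultimately show ?thesis by simp
qed

lemma ulim: "uniform_limit {t0..b} (\<lambda>n t. \<Sum>k<n. d k t) (\<lambda>t. \<Sum>k. d k t) sequentially"
proof (rule Weierstrass_m_test[OF _ M_summable[of "b - t0"]])
  fix n t assume t: "t \<in> {t0..b}"
  have "norm (d n t) \<le> B * K ^ n * (t - t0) ^ Suc n / fact (Suc n)"
    unfolding d_def using P_diff t by auto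
  also have "\<dots> \<le> B * K ^ n * (b - t0) ^ Suc n / fact (Suc n)"
    using t K B by (intro divide_right_mono mult_left_mono power_mono) auto
  finally show "norm (d n t) \<le> B * K ^ n * (b - t0) ^ Suc n / fact (Suc n)" .
qed

lemma X_close: "\<forall>\<^sub>F n in sequentially. \<forall>t\<in>{t0..b}. norm (P n t - X t) < e" if "e > 0"
proof -
  have "\<forall>\<^sub>F n in sequentially. \<forall>t\<in>{t0..b}. dist (\<Sum>k<n. d k t) (\<Sum>k. d k t) < e"
    using uniform_limitD[OF ulim that] by simp
  then show ?thesis
    by eventually_elim (simp add: P_sum X_def dist_norm)
qed

lemma X_cont: "continuous_on {t0..b} X"
proof -
  have "continuous_on {t0..b} (\<lambda>t. \<Sum>k. d k t)"
  proof (rule uniform_limit_theorem[OF _ ulim])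
    show "\<forall>\<^sub>F n in sequentially. continuous_on {t0..b} (\<lambda>t. \<Sum>k<n. d k t)"
      unfolding d_def by (intro always_eventually allI continuous_intros P_cont)
  qed simp
  then show ?thesis unfolding X_def by (intro continuous_intros)
qed

lemma X_eq: "X t = x0 + integral {t0..t} (\<lambda>s. G s (X s))" if t: "t0 \<le> t"
proof -
  let ?I = "integral {t0..t} (\<lambda>s. G s (X s))"
  have intX: "(\<lambda>s. G s (X s)) integrable_on {t0..t}"
    by (rule integrable_continuous_real contb X_cont)+
  have "norm (X t - (x0 + ?I)) \<le> e * (1 + K * (t - t0))" if e: "e > 0" for e
  proof -
    obtain N where N: "\<And>n. n \<ge> N \<Longrightarrow> \<forall>s\<in>{t0..t}. norm (P n s - X s) < e"
      using X_close[OF e, of t] unfolding eventually_sequentially by blast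
    have a: "norm (P (Suc N) t - X t) < e" using N[of "Suc N"] t by auto
    have "norm (integral {t0..t} (\<lambda>s. G s (P N s)) - ?I) = norm (integral {t0..t} (\<lambda>s. G s (P N s) - G s (X s)))"
      using int_G intX by (simp add: integral_diff)
    also have "\<dots> \<le> integral {t0..t} (\<lambda>s. K * e)"
    proof (rule integral_norm_bound_integral)
      show "(\<lambda>s. G s (P N s) - G s (X s)) integrable_on {t0..t}" using int_G intX by (intro integrable_diff)
      fix s assume s: "s \<in> {t0..t}"
      have "norm (G s (P N s) - G s (X s)) \<le> K * norm (P N s - X s)" using lip s by auto
      also have "\<dots> \<le> K * e" using N[of N] s K by (auto intro!: mult_left_mono less_imp_le)
      finally show "norm (G s (P N s) - G s (X s)) \<le> K * e" .
    qed auto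
    also have "\<dots> = K * e * (t - t0)" using t by simp
    finally have b: "norm (integral {t0..t} (\<lambda>s. G s (P N s)) - ?I) \<le> K * e * (t - t0)" .
    have "X t - (x0 + ?I) = (X t - P (Suc N) t) + (integral {t0..t} (\<lambda>s. G s (P N s)) - ?I)"
      by simp
    also have "norm \<dots> \<le> norm (X t - P (Suc N) t) + norm (integral {t0..t} (\<lambda>s. G s (P N s)) - ?I)"
      by (rule norm_triangle_ineq)
    also have "\<dots> \<le> e + K * e * (t - t0)" using a b by (simp add: norm_minus_commute)
    finally show ?thesis by (simp add: algebra_simps)
  qed
  then have "norm (X t - (x0 + ?I)) \<le> 0"
  proof -
    assume h: "\<And>e. e > 0 \<Longrightarrow> norm (X t - (x0 + ?I)) \<le> e * (1 + K * (t - t0))"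
    have pos: "1 + K * (t - t0) > 0" using K t by (simp add: add_pos_nonneg)
    show ?thesis
    proof (rule field_le_epsilon)
      fix e :: real assume "e > 0"
      then show "norm (X t - (x0 + ?I)) \<le> 0 + e"
        using h[of "e / (1 + K * (t - t0))"] pos by simp
    qed
  qed
  then show ?thesis by simp
qed

lemma X_sol: "is_solution_on G {t0..} X \<and> X t0 = x0"
proof
  show "X t0 = x0" using X_eq[of t0] by simp
  show "is_solution_on G {t0..} X" unfolding is_solution_on_def
  proof
    fix t assume t: "t \<in> {t0..}"
    let ?b = "t + 1"
    have hd: "((\<lambda>u. integral {t0..u} (\<lambda>s. G s (X s))) has_vector_derivative G t (X t)) (at t within {t0..?b})"
      using t by (intro integral_has_vector_derivative contb X_cont) auto
    have "((\<lambda>u. x0 + integral {t0..u} (\<lambda>s. G s (X s))) has_vector_derivative G t (X t)) (at t within {t0..?b})"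
      using has_vector_derivative_add[OF has_vector_derivative_const hd] by simp
    then have "(X has_vector_derivative G t (X t)) (at t within {t0..?b})"
      by (rule has_vector_derivative_transform[rotated 2]) (use t X_eq in auto)
    moreover have "at t within {t0..?b} = at t within {t0..}"
      by (rule at_within_nhd[where S="{..<?b}"]) auto
    ultimately show "(X has_vector_derivative G t (X t)) (at t within {t0..})" by simp
  qed
qed

end

lemma picard_exists:
  fixes G :: "real \<Rightarrow> real\<times>real \<Rightarrow> real\<times>real"
  assumes "K > 0" "B \<ge> 0"
    and "\<And>z. continuous_on {t0..} (\<lambda>t. G t z)"
    and "\<And>t z w. t \<ge> t0 \<Longrightarrow> norm (G t z - G t w) \<le> K * norm (z - w)"
    and "\<And>t z. t \<ge> t0 \<Longrightarrow> norm (G t z) \<le> B"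
  shows "\<exists>x. is_solution_on G {t0..} x \<and> x t0 = x0"
proof -
  interpret picard_setup G t0 K B x0 by standard (use assms in auto)
  show ?thesis using X_sol by blast
qed

lemma vd_Un:
  assumes "(f has_vector_derivative D) (at x within S)" "(f has_vector_derivative D) (at x within U)"
  shows "(f has_vector_derivative D) (at x within (S \<union> U))"
  using assms unfolding has_vector_derivative_def has_derivative_within
  by (auto intro: Lim_Un)

lemma per_int:
  fixes F :: "real \<Rightarrow> 'b"
  assumes "\<And>t. F (t + T) = F t"
  shows "F (t + of_int k * T) = F t"
proof -
  have pos: "F (t + real n * T) = F t" for t n
    by (induction n arbitrary: t) (auto simp: algebra_simps assms[of "_ + _", simplified add.assoc] dest: sym,
        metis assms add.commute add.left_commute)
  show ?thesis
  proof (cases "k \<ge> 0")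
    case True then show ?thesis using pos[of t "nat k"] by simp
  next
    case False
    have "F (t + of_int k * T + real (nat (-k)) * T) = F (t + of_int k * T)" by (rule pos)
    moreover have "t + of_int k * T + real (nat (-k)) * T = t" using False by (simp add: algebra_simps)
    ultimately show ?thesis by simp
  qed
qed

lemma periodic_ext_deriv:
  fixes u :: "real \<Rightarrow> 'a::real_normed_vector" and F :: "real \<Rightarrow> 'a \<Rightarrow> 'a"
  assumes T: "T > 0" and u0: "u 0 = u T"
    and du: "\<And>t. t \<in> {0..T} \<Longrightarrow> (u has_vector_derivative F t (u t)) (at t within {0..T})"
    and Fper: "\<And>t z. F (t + T) z = F t z"
  shows "((\<lambda>s. u (s - T * of_int \<lfloor>s / T\<rfloor>)) has_vector_derivative
           F t (u (t - T * of_int \<lfloor>t / T\<rfloor>))) (at t)"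
proof -
  let ?up = "\<lambda>s. u (s - T * of_int \<lfloor>s / T\<rfloor>)"
  have Fk: "F (t + of_int k * T) z = F t z" for t k z
    using per_int[of "\<lambda>t. F t z" T t k] Fper by simp
  have piece: "?up s = u (s - of_int j * T)" if "of_int j * T \<le> s" "s \<le> of_int j * T + T" for s j
  proof (cases "s = of_int j * T + T")
    case True
    have "s / T = of_int (j + 1)" using True T by (simp add: field_simps)
    then have "\<lfloor>s / T\<rfloor> = j + 1" by (simp only: floor_of_int)
    then show ?thesis using True u0 by (simp add: algebra_simps)
  next
    case False
    then have "s < of_int j * T + T" using that by simp
    then have "\<lfloor>s / T\<rfloor> = j" using that T by (intro floor_unique) (auto simp: field_simps)
    then show ?thesis by (simp add: algebra_simps)
  qed
  have dpiece: "(?up has_vector_derivative F t (u (t - of_int j * T))) (at t within {of_int j * T .. of_int j * T + T})"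
    if "t \<in> {of_int j * T .. of_int j * T + T}" for j
  proof -
    let ?a = "of_int j * T"
    have 1: "((\<lambda>s. s - ?a) has_vector_derivative 1) (at t within {?a..?a+T})"
      by (auto intro!: derivative_eq_intros simp: has_real_derivative_iff_has_vector_derivative[symmetric])
    have img: "(\<lambda>s. s - ?a) ` {?a..?a+T} = {0..T}"
      by (auto simp: image_iff intro!: bexI[where x="_ + ?a"])
    have 2: "(u has_vector_derivative F (t - ?a) (u (t - ?a))) (at (t - ?a) within (\<lambda>s. s - ?a) ` {?a..?a+T})"
      unfolding img using du[of "t - ?a"] that by auto
    have "((u \<circ> (\<lambda>s. s - ?a)) has_vector_derivative 1 *\<^sub>R F (t - ?a) (u (t - ?a))) (at t within {?a..?a+T})"
      by (rule vector_diff_chain_within[OF 1 2])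
    then have "((\<lambda>s. u (s - ?a)) has_vector_derivative F t (u (t - ?a))) (at t within {?a..?a+T})"
      using Fk[of t "-j"] by (simp add: o_def)
    then show ?thesis
      by (rule has_vector_derivative_transform[rotated 2]) (use that piece in auto)
  qed
  define k where "k = \<lfloor>t / T\<rfloor>"
  have ka1: "of_int k \<le> t / T" "t / T < of_int k + 1"
    unfolding k_def by linarith+
  have ka: "of_int k * T \<le> t" "t < of_int k * T + T"
    using ka1 T by (auto simp: field_simps)
  show ?thesis
  proof (cases "t = of_int k * T")
    case False
    then have "of_int k * T < t" using ka by simp
    then have "at t within {of_int k * T .. of_int k * T + T} = at t"
      using ka by (intro at_within_Icc_at)
    then show ?thesis using dpiece[of k] ka by (simp add: k_def algebra_simps)
  next
    case True
    have r: "(?up has_vector_derivative F t (u (t - of_int k * T))) (at t within {of_int k * T .. of_int k * T + T})"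
      using dpiece[of k] ka by auto
    have l0: "(?up has_vector_derivative F t (u (t - of_int (k - 1) * T))) (at t within {of_int (k-1) * T .. of_int (k-1) * T + T})"
      using dpiece[of "k - 1"] True T by (auto simp: algebra_simps)
    have "u (t - of_int (k - 1) * T) = u (t - of_int k * T)"
      using True u0 by (simp add: algebra_simps)
    then have l: "(?up has_vector_derivative F t (u (t - of_int k * T))) (at t within {of_int (k-1) * T .. of_int k * T})"
      using l0 by (simp add: algebra_simps)
    have "(?up has_vector_derivative F t (u (t - of_int k * T))) (at t within ({of_int (k-1) * T .. of_int k * T} \<union> {of_int k * T .. of_int k * T + T}))"
      by (rule vd_Un[OF l r])
    moreover have "{of_int (k-1) * T .. of_int k * T} \<union> {of_int k * T .. of_int k * T + T} = {t - T .. t + T}"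
      using True T by (auto simp: algebra_simps)
    moreover have "at t within {t - T .. t + T} = at t" using T by (intro at_within_Icc_at) auto
    ultimately show ?thesis by (simp add: k_def mult.commute)
  qed
qed

lemma blin_vd:
  assumes L: "bounded_linear L" and g: "(g has_vector_derivative D) F"
  shows "((\<lambda>x. L (g x)) has_vector_derivative L D) F"
  using bounded_linear.has_derivative[OF L g[unfolded has_vector_derivative_def]]
  unfolding has_vector_derivative_def by (simp add: linear_simps L)

lemma bl_ent: "bounded_linear (\<lambda>M::complex^2^2. Re (M $ i $ j))"
  by (intro bounded_linear_compose[OF bounded_linear_Re] bounded_linear_compose[OF bounded_linear_vec_nth] bounded_linear_vec_nth)

lemma herm21: "hermitian2 M \<Longrightarrow> Re (M $ 2 $ 1) = Re (M $ 1 $ 2)"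
proof -
  assume h: "hermitian2 M"
  then have eq: "adjoint2 M = M" by (simp add: hermitian2_def)
  have "adjoint2 M $ 2 $ 1 = M $ 2 $ 1" by (simp only: eq)
  then have "M $ 2 $ 1 = cnj (M $ 1 $ 2)" by (simp add: adjoint2_def)
  then show ?thesis by simp
qed

lemma ent_D:
  fixes M :: "complex^2^2" and c e :: real
  defines "A \<equiv> vector [vector [0, 1], vector [complex_of_real c, complex_of_real e]] :: complex^2^2"
  assumes h: "hermitian2 M"
  shows "Re ((- mat 1 - M ** A - adjoint2 A ** M) $ 1 $ 1) = -1 - 2 * c * Re (M $ 1 $ 2)"
    "Re ((- mat 1 - M ** A - adjoint2 A ** M) $ 1 $ 2) = - (Re (M $ 1 $ 1) + e * Re (M $ 1 $ 2)) - c * Re (M $ 2 $ 2)"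
    "Re ((- mat 1 - M ** A - adjoint2 A ** M) $ 2 $ 2) = -1 - 2 * (Re (M $ 1 $ 2) + e * Re (M $ 2 $ 2))"
  using herm21[OF h]
  by (simp_all add: A_def matrix_matrix_mult_def mat_def adjoint2_def sum_2)

lemma cs2: "\<bar>x * a + y * b\<bar> \<le> sqrt (x\<^sup>2 + y\<^sup>2) * sqrt (a\<^sup>2 + b\<^sup>2)" for x y a b :: real
proof -
  have "(x * a + y * b)\<^sup>2 \<le> (x\<^sup>2 + y\<^sup>2) * (a\<^sup>2 + b\<^sup>2)"
    using sum_squares_ge_zero[of "x*b - y*a" 0] by (simp add: power2_eq_square algebra_simps)
  then have "\<bar>x * a + y * b\<bar> \<le> sqrt ((x\<^sup>2 + y\<^sup>2) * (a\<^sup>2 + b\<^sup>2))"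
    using real_sqrt_le_mono by fastforce
  then show ?thesis by (simp add: real_sqrt_mult)
qed

lemma norm_mv_le: "norm (M *v v) \<le> (\<Sum>i\<in>UNIV. \<Sum>j\<in>UNIV. norm (M $ i $ j)) * norm v"
  for M :: "complex^2^2"
proof -
  have "norm (M *v v) \<le> (\<Sum>i\<in>UNIV. norm ((M *v v) $ i))" by (simp add: norm_vec_def L2_set_le_sum)
  also have "\<dots> \<le> (\<Sum>i\<in>UNIV. \<Sum>j\<in>UNIV. norm (M $ i $ j) * norm v)"
  proof (rule sum_mono)
    fix i
    have "norm ((M *v v) $ i) = norm (\<Sum>j\<in>UNIV. M $ i $ j * v $ j)" by (simp add: matrix_vector_mult_def)
    also have "\<dots> \<le> (\<Sum>j\<in>UNIV. norm (M $ i $ j * v $ j))" by (rule norm_sum)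
    also have "\<dots> \<le> (\<Sum>j\<in>UNIV. norm (M $ i $ j) * norm v)"
      unfolding norm_mult by (intro sum_mono mult_left_mono Finite_Cartesian_Product.norm_nth_le norm_ge_zero)
    finally show "norm ((M *v v) $ i) \<le> (\<Sum>j\<in>UNIV. norm (M $ i $ j) * norm v)" .
  qed
  finally show ?thesis by (simp add: sum_distrib_right)
qed

lemma spec_norm_le: "spec_norm M \<le> (\<Sum>i\<in>UNIV. \<Sum>j\<in>UNIV. norm (M $ i $ j))"
  unfolding spec_norm_def by (rule onorm_le) (rule norm_mv_le)

lemma spec_norm_ge0: "spec_norm M \<ge> 0"
  unfolding spec_norm_def by (rule onorm_pos_le) simp

lemma quad_bound:
  fixes M :: "complex^2^2" and z1 z2 w1 w2 :: real
  assumes h: "hermitian2 M"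
  shows "\<bar>z1 * (Re (M$1$1) * w1 + Re (M$1$2) * w2) + z2 * (Re (M$1$2) * w1 + Re (M$2$2) * w2)\<bar>
          \<le> spec_norm M * sqrt (z1\<^sup>2 + z2\<^sup>2) * sqrt (w1\<^sup>2 + w2\<^sup>2)"
proof -
  define cw where "cw = (vector [complex_of_real w1, complex_of_real w2] :: complex^2)"
  have n: "norm cw = sqrt (w1\<^sup>2 + w2\<^sup>2)"
    by (simp add: cw_def norm_vec_def L2_set_def sum_2)
  have e1: "Re ((M *v cw) $ 1) = Re (M$1$1) * w1 + Re (M$1$2) * w2"
    by (simp add: cw_def matrix_vector_mult_def sum_2)
  have e2: "Re ((M *v cw) $ 2) = Re (M$1$2) * w1 + Re (M$2$2) * w2"
    using herm21[OF h] by (simp add: cw_def matrix_vector_mult_def sum_2)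
  have "\<bar>z1 * Re ((M *v cw) $ 1) + z2 * Re ((M *v cw) $ 2)\<bar>
        \<le> sqrt (z1\<^sup>2 + z2\<^sup>2) * sqrt ((Re ((M *v cw) $ 1))\<^sup>2 + (Re ((M *v cw) $ 2))\<^sup>2)"
    by (rule cs2)
  also have "sqrt ((Re ((M *v cw) $ 1))\<^sup>2 + (Re ((M *v cw) $ 2))\<^sup>2) \<le> norm (M *v cw)"
  proof -
    have "(Re ((M *v cw) $ 1))\<^sup>2 + (Re ((M *v cw) $ 2))\<^sup>2 \<le> (norm ((M *v cw) $ 1))\<^sup>2 + (norm ((M *v cw) $ 2))\<^sup>2"
      by (intro add_mono; metis abs_Re_le_cmod abs_ge_zero power2_abs power_mono)
    then show ?thesis by (simp add: norm_vec_def L2_set_def sum_2)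
  qed
  also have "norm (M *v cw) \<le> spec_norm M * norm cw"
    unfolding spec_norm_def by (rule onorm) simp
  finally have "\<bar>z1 * Re ((M *v cw) $ 1) + z2 * Re ((M *v cw) $ 2)\<bar> \<le> sqrt (z1\<^sup>2 + z2\<^sup>2) * (spec_norm M * norm cw)"
    by (simp add: mult_left_mono)
  then show ?thesis using e1 e2 n by (simp add: mult_ac)
qed

locale sys =
  fixes T \<alpha> \<beta> \<mu> :: real and \<phi> f :: "real \<Rightarrow> real" and H :: "real \<Rightarrow> complex^2^2"
  assumes T: "T > 0"
    and \<phi>_cont: "continuous_on UNIV \<phi>"
    and \<phi>_per: "\<And>t. \<phi> (t + T) = \<phi> t"
    and H_herm: "\<And>t. t \<in> {0..T} \<Longrightarrow> hermitian2 (H t)"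
    and H_ode: "\<And>t. t \<in> {0..T} \<Longrightarrow>
        (H has_vector_derivative
           (- mat 1 - H t ** Atilde \<alpha> (\<beta> * deriv f 0) (\<lambda>s. \<phi> s * deriv f 0) \<mu> t
            - adjoint2 (Atilde \<alpha> (\<beta> * deriv f 0) (\<lambda>s. \<phi> s * deriv f 0) \<mu> t) ** H t))
        (at t within {0..T})"
    and H_per: "H 0 = H T"
begin

definition "cc t = - (\<beta> * deriv f 0) * \<mu>^2 - \<mu> * (\<phi> t * deriv f 0)"
definition "ee = - \<alpha> * \<mu>"
definition "u t = (Re (H t $ 1 $ 1), Re (H t $ 1 $ 2), Re (H t $ 2 $ 2))"
definition "Fr t w = (-1 - 2 * cc t * fst (snd w),
                      - (fst w + ee * fst (snd w)) - cc t * snd (snd w),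
                      -1 - 2 * (fst (snd w) + ee * snd (snd w)))"
definition "per t = t - T * of_int \<lfloor>t / T\<rfloor>"
definition "Rp t = u (per t)"
definition "r11 t = fst (Rp t)"
definition "r12 t = fst (snd (Rp t))"
definition "r22 t = snd (snd (Rp t))"
definition "hm = (SUP t\<in>{0..T}. spec_norm (H t))"

lemma per_range: "0 \<le> per t" "per t \<le> T"
proof -
  have "of_int \<lfloor>t / T\<rfloor> * T \<le> t" "t < (of_int \<lfloor>t / T\<rfloor> + 1) * T"
    using floor_divide_lower[OF T, of t] floor_divide_upper[OF T, of t] by auto
  then have "T * of_int \<lfloor>t / T\<rfloor> \<le> t" "t < T * (of_int \<lfloor>t / T\<rfloor> + 1)"
    by (simp_all add: mult.commute)
  then show "0 \<le> per t" "per t \<le> T" unfolding per_def by (simp_all add: algebra_simps)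
qed

lemma cc_per: "cc (t + T) = cc t" unfolding cc_def using \<phi>_per by simp

lemma u_deriv: "t \<in> {0..T} \<Longrightarrow> (u has_vector_derivative Fr t (u t)) (at t within {0..T})"
proof -
  assume t: "t \<in> {0..T}"
  let ?D = "- mat 1 - H t ** Atilde \<alpha> (\<beta> * deriv f 0) (\<lambda>s. \<phi> s * deriv f 0) \<mu> t
            - adjoint2 (Atilde \<alpha> (\<beta> * deriv f 0) (\<lambda>s. \<phi> s * deriv f 0) \<mu> t) ** H t"
  have A: "Atilde \<alpha> (\<beta> * deriv f 0) (\<lambda>s. \<phi> s * deriv f 0) \<mu> t =
     vector [vector [0, 1], vector [complex_of_real (cc t), complex_of_real ee]]"
    unfolding Atilde_def cc_def ee_def by simp
  have d: "((\<lambda>s. Re (H s $ i $ j)) has_vector_derivative Re (?D $ i $ j)) (at t within {0..T})" for i j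
    by (rule blin_vd[OF bl_ent H_ode[OF t]])
  note e = ent_D[OF H_herm[OF t], of "cc t" ee, folded A]
  have "((\<lambda>s. (Re (H s $ 1 $ 1), Re (H s $ 1 $ 2), Re (H s $ 2 $ 2))) has_vector_derivative
        (Re (?D $ 1 $ 1), Re (?D $ 1 $ 2), Re (?D $ 2 $ 2))) (at t within {0..T})"
    by (intro has_vector_derivative_Pair d)
  then show ?thesis unfolding u_def Fr_def e by simp
qed

lemma Rp_deriv: "(Rp has_vector_derivative Fr t (Rp t)) (at t)"
proof -
  have "((\<lambda>s. u (s - T * of_int \<lfloor>s / T\<rfloor>)) has_vector_derivative
           Fr t (u (t - T * of_int \<lfloor>t / T\<rfloor>))) (at t)"
  proof (rule periodic_ext_deriv[OF T])
    show "u 0 = u T" unfolding u_def using H_per by simp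
    show "\<And>t. t \<in> {0..T} \<Longrightarrow> (u has_vector_derivative Fr t (u t)) (at t within {0..T})" by (rule u_deriv)
    show "\<And>t z. Fr (t + T) z = Fr t z" unfolding Fr_def using cc_per by simp
  qed
  then show ?thesis unfolding Rp_def per_def .
qed

lemma r11_deriv: "(r11 has_real_derivative (-1 - 2 * cc t * r12 t)) (at t)"
  and r12_deriv: "(r12 has_real_derivative (- (r11 t + ee * r12 t) - cc t * r22 t)) (at t)"
  and r22_deriv: "(r22 has_real_derivative (-1 - 2 * (r12 t + ee * r22 t))) (at t)"
proof -
  have a: "((\<lambda>s. fst (Rp s)) has_vector_derivative fst (Fr t (Rp t))) (at t)"
    by (rule blin_vd[OF bounded_linear_fst Rp_deriv])
  have b: "((\<lambda>s. fst (snd (Rp s))) has_vector_derivative fst (snd (Fr t (Rp t)))) (at t)"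
    by (rule blin_vd[OF bounded_linear_compose[OF bounded_linear_fst bounded_linear_snd] Rp_deriv])
  have c: "((\<lambda>s. snd (snd (Rp s))) has_vector_derivative snd (snd (Fr t (Rp t)))) (at t)"
    by (rule blin_vd[OF bounded_linear_compose[OF bounded_linear_snd bounded_linear_snd] Rp_deriv])
  show "(r11 has_real_derivative (-1 - 2 * cc t * r12 t)) (at t)"
    using a unfolding has_real_derivative_iff_has_vector_derivative r11_def r12_def Fr_def by simp
  show "(r12 has_real_derivative (- (r11 t + ee * r12 t) - cc t * r22 t)) (at t)"
    using b unfolding has_real_derivative_iff_has_vector_derivative r11_def r12_def r22_def Fr_def by simp
  show "(r22 has_real_derivative (-1 - 2 * (r12 t + ee * r22 t))) (at t)"
    using c unfolding has_real_derivative_iff_has_vector_derivative r22_def r12_def Fr_def by simp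
qed

lemma H_cont: "continuous_on {0..T} H"
  using H_ode unfolding continuous_on_eq_continuous_within
  by (meson has_vector_derivative_continuous)

lemma hm_bdd: "bdd_above ((\<lambda>t. spec_norm (H t)) ` {0..T})"
proof -
  have "continuous_on {0..T} (\<lambda>t. \<Sum>i\<in>UNIV. \<Sum>j\<in>UNIV. norm (H t $ i $ j))"
    by (intro continuous_intros continuous_on_compose2[OF _ H_cont, of UNIV "\<lambda>M. M $ _ $ _"]
        linear_continuous_on bounded_linear_compose[OF bounded_linear_vec_nth bounded_linear_vec_nth]) auto
  then have "bounded ((\<lambda>t. \<Sum>i\<in>UNIV. \<Sum>j\<in>UNIV. norm (H t $ i $ j)) ` {0..T})"
    by (intro compact_imp_bounded compact_continuous_image) auto
  then obtain B where B0: "\<forall>x\<in>(\<lambda>t. \<Sum>i\<in>UNIV. \<Sum>j\<in>UNIV. norm (H t $ i $ j)) ` {0..T}. norm x \<le> B"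
    unfolding bounded_iff by blast
  have B: "\<And>t. t \<in> {0..T} \<Longrightarrow> (\<Sum>i\<in>UNIV. \<Sum>j\<in>UNIV. norm (H t $ i $ j)) \<le> B"
  proof -
    fix t assume "t \<in> {0..T}"
    then have "norm (\<Sum>i\<in>UNIV. \<Sum>j\<in>UNIV. norm (H t $ i $ j)) \<le> B" using B0 by blast
    then show "(\<Sum>i\<in>UNIV. \<Sum>j\<in>UNIV. norm (H t $ i $ j)) \<le> B" by simp
  qed
  show ?thesis
    by (rule bdd_aboveI[where M=B]) (use B spec_norm_le order_trans in blast)
qed

lemma hm_ge: "t \<in> {0..T} \<Longrightarrow> spec_norm (H t) \<le> hm"
  unfolding hm_def by (rule cSUP_upper[OF _ hm_bdd])

lemma hm_nonneg: "hm \<ge> 0"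
  using hm_ge[of 0] spec_norm_ge0[of "H 0"] T by simp

lemma Rp_bound: "\<bar>z1 * (r11 t * w1 + r12 t * w2) + z2 * (r12 t * w1 + r22 t * w2)\<bar>
                 \<le> hm * sqrt (z1\<^sup>2 + z2\<^sup>2) * sqrt (w1\<^sup>2 + w2\<^sup>2)"
proof -
  have s: "per t \<in> {0..T}" using per_range by auto
  have "\<bar>z1 * (r11 t * w1 + r12 t * w2) + z2 * (r12 t * w1 + r22 t * w2)\<bar>
       \<le> spec_norm (H (per t)) * sqrt (z1\<^sup>2 + z2\<^sup>2) * sqrt (w1\<^sup>2 + w2\<^sup>2)"
    using quad_bound[OF H_herm[OF s], of z1 w1 w2 z2] unfolding r11_def r12_def r22_def Rp_def u_def by simp
  also have "\<dots> \<le> hm * sqrt (z1\<^sup>2 + z2\<^sup>2) * sqrt (w1\<^sup>2 + w2\<^sup>2)"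
    using hm_ge[OF s] by (intro mult_right_mono) auto
  finally show ?thesis .
qed

end

lemma decr_on:
  fixes V :: "real \<Rightarrow> real"
  assumes ab: "a \<le> b"
    and d: "\<And>t. t \<in> {a..b} \<Longrightarrow> \<exists>D. (V has_real_derivative D) (at t within {a..b}) \<and> D \<le> 0"
  shows "V b \<le> V a"
proof (rule DERIV_nonpos_imp_decreasing_open[OF ab])
  fix x assume x: "a < x" "x < b"
  then obtain D where "(V has_real_derivative D) (at x within {a..b})" "D \<le> 0" using d[of x] by auto
  then show "\<exists>y. DERIV V x :> y \<and> y \<le> 0"
    using at_within_Icc_at[of a x b] x by auto
next
  show "continuous_on {a..b} V"
    unfolding continuous_on_eq_continuous_within
    using d DERIV_continuous by blast
qed

lemma norm_pair: "norm z = sqrt ((fst z)\<^sup>2 + (snd z)\<^sup>2)" for z :: "real \<times> real"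
  by (cases z) (simp add: norm_Pair)

lemma norm_pair_sq: "(norm z)\<^sup>2 = (fst z)\<^sup>2 + (snd z)\<^sup>2" for z :: "real \<times> real"
  by (simp add: norm_pair)

lemma fst_le_norm: "\<bar>fst z\<bar> \<le> norm z" and snd_le_norm: "\<bar>snd z\<bar> \<le> norm z" for z :: "real \<times> real"
  unfolding norm_pair by (auto intro!: real_le_rsqrt)

context sys begin

definition "Q t z = r11 t * (fst z)\<^sup>2 + 2 * r12 t * fst z * snd z + r22 t * (snd z)\<^sup>2"

lemma r_cont: "continuous_on S r11" "continuous_on S r12" "continuous_on S r22"
  using r11_deriv r12_deriv r22_deriv
  by (auto intro!: continuous_at_imp_continuous_on DERIV_isCont)

lemma Q_cont: "continuous_on S (\<lambda>p. Q (fst p) (snd p))"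
  unfolding Q_def
  by (intro continuous_intros continuous_on_compose2[OF r_cont(1)] continuous_on_compose2[OF r_cont(2)]
      continuous_on_compose2[OF r_cont(3)]) auto

lemma Q_bound: "\<bar>Q t z\<bar> \<le> hm * (norm z)\<^sup>2"
  using Rp_bound[of "fst z" t "fst z" "snd z" "snd z"]
  by (simp add: Q_def norm_pair power2_eq_square algebra_simps)

lemma lin_bound: "\<bar>r12 t * fst z + r22 t * snd z\<bar> \<le> hm * norm z"
  using Rp_bound[of 0 t "fst z" "snd z" 1]
  by (simp add: norm_pair)

lemma Q_scale: "Q t (c *\<^sub>R z) = c\<^sup>2 * Q t z"
  by (simp add: Q_def power2_eq_square algebra_simps)

lemma Q_deriv:
  fixes x :: "real \<Rightarrow> real \<times> real"
  assumes dx: "(x has_vector_derivative (snd (x t), cc t * fst (x t) + ee * snd (x t) + dd)) (at t within S)"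
  shows "((\<lambda>s. Q s (x s)) has_real_derivative
           (- (norm (x t))\<^sup>2 + 2 * (r12 t * fst (x t) + r22 t * snd (x t)) * dd)) (at t within S)"
proof -
  have dy: "((\<lambda>s. fst (x s)) has_real_derivative snd (x t)) (at t within S)"
    using blin_vd[OF bounded_linear_fst dx] unfolding has_real_derivative_iff_has_vector_derivative by simp
  have dv: "((\<lambda>s. snd (x s)) has_real_derivative (cc t * fst (x t) + ee * snd (x t) + dd)) (at t within S)"
    using blin_vd[OF bounded_linear_snd dx] unfolding has_real_derivative_iff_has_vector_derivative by simp
  note d11 = has_field_derivative_at_within[OF r11_deriv, of t S]
  note d12 = has_field_derivative_at_within[OF r12_deriv, of t S]
  note d22 = has_field_derivative_at_within[OF r22_deriv, of t S]
  note e = DERIV_add[OF DERIV_add[OF DERIV_mult[OF d11 DERIV_mult[OF dy dy]]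
          DERIV_cmult[OF DERIV_mult[OF d12 DERIV_mult[OF dy dv]], of 2]] DERIV_mult[OF d22 DERIV_mult[OF dv dv]]]
  have fe: "(\<lambda>s. Q s (x s)) = (\<lambda>s. r11 s * (fst (x s) * fst (x s)) + 2 * (r12 s * (fst (x s) * snd (x s)))
       + r22 s * (snd (x s) * snd (x s)))"
    by (simp add: Q_def power2_eq_square algebra_simps fun_eq_iff)
  show ?thesis unfolding fe norm_pair_sq
    by (rule DERIV_cong[OF e]) (simp add: power2_eq_square algebra_simps)
qed

end

locale sysL = sys +
  assumes lin: "asymp_stable (second_order_sys (\<alpha> * \<mu>)
           (\<lambda>t. \<beta> * deriv f 0 * \<mu>^2 + \<mu> * (\<phi> t * deriv f 0)) (\<lambda>y. y))"
begin

abbreviation "FL \<equiv> second_order_sys (\<alpha> * \<mu>) (\<lambda>t. \<beta> * deriv f 0 * \<mu>^2 + \<mu> * (\<phi> t * deriv f 0)) (\<lambda>y. y)"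

lemma FL_eq: "FL t z = (snd z, cc t * fst z + ee * snd z + 0)"
  by (simp add: second_order_sys_def cc_def ee_def algebra_simps)

lemma pos_at:
  assumes t1: "t1 \<in> {0..T}" and w: "w \<noteq> 0"
  shows "Q t1 w > 0"
proof (rule ccontr)
  assume "\<not> Q t1 w > 0"
  then have Qw: "Q t1 w \<le> 0" by simp
  have t10: "t1 \<ge> 0" using t1 by simp
  obtain \<delta>1 where d1: "\<delta>1 > 0" and ex: "\<And>x0. norm x0 < \<delta>1 \<Longrightarrow> \<exists>x. is_solution_on FL {t1..} x \<and> x t1 = x0"
    using lin t10 unfolding asymp_stable_def lyap_stable_def by (meson zero_less_one)
  obtain \<delta>2 where d2: "\<delta>2 > 0" and att: "\<And>x. is_solution_on FL {t1..} x \<Longrightarrow> norm (x t1) < \<delta>2 \<Longrightarrow> (x \<longlongrightarrow> 0) at_top"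
    using lin t10 unfolding asymp_stable_def lyap_attractive_def by blast
  define \<delta> where "\<delta> = min \<delta>1 \<delta>2"
  have dpos: "\<delta> > 0" using d1 d2 by (simp add: \<delta>_def)
  have nw: "norm w > 0" using w by simp
  define c where "c = \<delta> / (2 * norm w)"
  define w' where "w' = c *\<^sub>R w"
  have cpos: "c > 0" using dpos nw by (simp add: c_def)
  have nw': "norm w' = \<delta> / 2" using nw cpos dpos by (simp add: w'_def c_def)
  obtain x where sol: "is_solution_on FL {t1..} x" and x1: "x t1 = w'"
  proof -
    have "\<delta> \<le> \<delta>1" by (simp add: \<delta>_def)
    then have "norm w' < \<delta>1" using nw' dpos by linarith
    then show ?thesis using ex[of w'] that by blast
  qed
  have "\<delta> \<le> \<delta>2" by (simp add: \<delta>_def)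
  then have "norm (x t1) < \<delta>2" using dpos by (simp add: x1 nw')
  then have lim: "(x \<longlongrightarrow> 0) at_top" using att[OF sol] by blast
  have Qw': "Q t1 w' \<le> 0" using Qw by (simp add: w'_def Q_scale mult_nonneg_nonpos)
  let ?V = "\<lambda>s. Q s (x s)"
  have dx: "(x has_vector_derivative FL s (x s)) (at s within {t1..})" if "s \<ge> t1" for s
    using sol that unfolding is_solution_on_def by auto
  have dV: "(?V has_real_derivative - (norm (x s))\<^sup>2) (at s within {t1..})" if "s \<ge> t1" for s
    using Q_deriv[where x=x and t=s and S="{t1..}" and dd=0] dx[OF that] unfolding FL_eq by simp
  have dVi: "(?V has_real_derivative - (norm (x s))\<^sup>2) (at s within {a..b})" if "s \<in> {a..b}" "a \<ge> t1" for s a b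
    by (rule DERIV_subset[OF dV]) (use that in auto)
  have "continuous (at t1 within {t1..}) x"
    using dx[of t1] has_vector_derivative_continuous by auto
  then have cw: "\<forall>e>0. \<exists>d>0. \<forall>s\<in>{t1..}. dist s t1 < d \<longrightarrow> dist (x s) (x t1) < e"
    unfolding continuous_within_eps_delta .
  have "\<delta> / 4 > 0" using dpos by simp
  then obtain \<tau> where tau: "\<tau> > 0" and tc: "\<And>s. s \<in> {t1..} \<Longrightarrow> dist s t1 < \<tau> \<Longrightarrow> dist (x s) (x t1) < \<delta> / 4"
    using cw by blast
  define b1 where "b1 = t1 + \<tau> / 2"
  define k where "k = (\<delta> / 4)\<^sup>2"
  have kpos: "k > 0" using dpos by (simp add: k_def)
  have big: "norm (x s) \<ge> \<delta> / 4" if "s \<in> {t1..b1}" for s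
  proof -
    have "dist (x s) w' < \<delta> / 4" using tc[of s] that tau x1 by (auto simp: b1_def dist_real_def)
    then have "norm w' - norm (x s) < \<delta> / 4" using norm_triangle_ineq2[of w' "x s"]
      by (simp add: dist_norm norm_minus_commute)
    then show ?thesis using nw' by simp
  qed
  have "(\<lambda>s. ?V s + k * s) b1 \<le> (\<lambda>s. ?V s + k * s) t1"
  proof (rule decr_on[where V="\<lambda>s. ?V s + k * s"])
    show "t1 \<le> b1" using tau by (simp add: b1_def)
    fix s assume s: "s \<in> {t1..b1}"
    have "((\<lambda>s. ?V s + k * s) has_real_derivative - (norm (x s))\<^sup>2 + k * 1) (at s within {t1..b1})"
      by (intro DERIV_add dVi[OF s] DERIV_cmult DERIV_ident) simp
    moreover have "- (norm (x s))\<^sup>2 + k * 1 \<le> 0"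
      using big[OF s] dpos unfolding k_def by (simp add: power_mono)
    ultimately show "\<exists>D. ((\<lambda>s. ?V s + k * s) has_real_derivative D) (at s within {t1..b1}) \<and> D \<le> 0" by blast
  qed
  then have Vb1: "?V b1 \<le> - k * (\<tau> / 2)" using Qw' x1 by (simp add: b1_def algebra_simps)
  have Vs: "?V s \<le> - k * (\<tau> / 2)" if "s \<ge> b1" for s
  proof -
    have "?V s \<le> ?V b1"
    proof (rule decr_on[where V="?V"])
      show "b1 \<le> s" by (rule that)
      fix r assume r: "r \<in> {b1..s}"
      have "b1 \<ge> t1" using tau by (simp add: b1_def)
      then show "\<exists>D. (?V has_real_derivative D) (at r within {b1..s}) \<and> D \<le> 0"
        using dVi[OF r] by fastforce
    qed
    then show ?thesis using Vb1 by simp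
  qed
  define e where "e = sqrt (k * (\<tau> / 2) / (hm + 1))"
  have epos: "e > 0" using kpos tau hm_nonneg by (simp add: e_def)
  have "\<forall>\<^sub>F s in at_top. dist (x s) 0 < e" using lim epos by (rule tendstoD)
  then obtain N where N: "\<And>s. s \<ge> N \<Longrightarrow> norm (x s) < e" unfolding eventually_at_top_linorder by auto
  define s where "s = max N b1"
  have ns: "norm (x s) < e" using N[of s] by (simp add: s_def)
  have "(norm (x s))\<^sup>2 \<le> e\<^sup>2" using ns by (simp add: power_mono)
  also have "e\<^sup>2 = k * (\<tau> / 2) / (hm + 1)" using kpos tau hm_nonneg by (simp add: e_def)
  finally have ns2: "(norm (x s))\<^sup>2 \<le> k * (\<tau> / 2) / (hm + 1)" .
  have "\<bar>?V s\<bar> \<le> hm * (norm (x s))\<^sup>2" by (rule Q_bound)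
  also have "\<dots> \<le> hm * (k * (\<tau> / 2) / (hm + 1))" using ns2 hm_nonneg by (rule mult_left_mono)
  also have "\<dots> < k * (\<tau> / 2)" using kpos tau hm_nonneg by (simp add: field_simps)
  finally have "\<bar>?V s\<bar> < k * (\<tau> / 2)" .
  moreover have "?V s \<le> - k * (\<tau> / 2)" using Vs[of s] by (simp add: s_def)
  ultimately show False by linarith
qed

lemma Rp_u: "s \<in> {0..T} \<Longrightarrow> Rp s = u s"
proof -
  assume s: "s \<in> {0..T}"
  show ?thesis
  proof (cases "s = T")
    case True
    have "\<lfloor>s / T\<rfloor> = 1" using True T by simp
    then show ?thesis using True H_per by (simp add: Rp_def per_def u_def)
  next
    case False
    then have "\<lfloor>s / T\<rfloor> = 0" using s T by (intro floor_unique) (auto simp: field_simps)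
    then show ?thesis by (simp add: Rp_def per_def)
  qed
qed

lemma Q_per: "Q (per t) z = Q t z"
proof -
  have 1: "Rp (per t) = u (per t)" by (rule Rp_u) (use per_range in auto)
  have 2: "Rp t = u (per t)" unfolding Rp_def ..
  have "Rp (per t) = Rp t" unfolding 1 2 ..
  then show ?thesis by (simp add: Q_def r11_def r12_def r22_def)
qed

lemma Q_unif: "\<exists>m>0. \<forall>t z. Q t z \<ge> m * (norm z)\<^sup>2"
proof -
  let ?K = "{0..T} \<times> sphere (0::real\<times>real) 1"
  have c: "compact ?K" by (intro compact_Times compact_sphere compact_Icc)
  have "(0, (1::real, 0::real)) \<in> ?K" using T by (simp add: mem_Times_iff)
  then have ne: "?K \<noteq> {}" by blast
  obtain p where p: "p \<in> ?K" and pmin: "\<And>q. q \<in> ?K \<Longrightarrow> Q (fst p) (snd p) \<le> Q (fst q) (snd q)"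
    using continuous_attains_inf[OF c ne Q_cont] by blast
  define m where "m = Q (fst p) (snd p)"
  have "fst p \<in> {0..T}" "snd p \<noteq> 0" using p by (auto simp: mem_Times_iff)
  then have mpos: "m > 0" unfolding m_def by (rule pos_at)
  have "Q t z \<ge> m * (norm z)\<^sup>2" for t z
  proof (cases "z = 0")
    case True then show ?thesis by (simp add: Q_def)
  next
    case False
    define z1 where "z1 = (1 / norm z) *\<^sub>R z"
    have "norm z1 = 1" using False by (simp add: z1_def)
    then have "(per t, z1) \<in> ?K" using per_range by (simp add: mem_Times_iff)
    then have a: "m \<le> Q (per t) z1" using pmin[of "(per t, z1)"] by (simp add: m_def)
    have e: "norm z *\<^sub>R z1 = z" using False by (simp add: z1_def)
    have "Q t z = Q (per t) (norm z *\<^sub>R z1)" by (simp only: e Q_per)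
    then have b: "Q t z = (norm z)\<^sup>2 * Q (per t) z1" by (simp only: Q_scale)
    have "m * (norm z)\<^sup>2 \<le> Q (per t) z1 * (norm z)\<^sup>2" using a by (rule mult_right_mono) simp
    then show ?thesis using b by (simp add: mult.commute)
  qed
  then show ?thesis using mpos by blast
qed

end

locale sysN = sysL +
  fixes p \<rho> \<Delta>\<alpha> \<Delta>\<beta> :: real and \<Delta>\<phi> :: "real \<Rightarrow> real"
  assumes \<mu>pos: "\<mu> > 0"
    and f_smooth: "\<And>n x. ((deriv ^^ n) f) differentiable (at x)"
    and \<Delta>\<phi>_cont: "continuous_on {0..} \<Delta>\<phi>" and \<Delta>\<phi>_bdd: "bounded (\<Delta>\<phi> ` {0..})"
    and p: "p \<ge> 0" and \<rho>: "\<rho> > 0"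
    and f_quad: "\<And>\<xi>. \<bar>\<xi>\<bar> \<le> \<rho> \<Longrightarrow> \<bar>f \<xi> - deriv f 0 * \<xi>\<bar> \<le> p * \<xi>\<^sup>2"
    and small1: "\<mu> * (SUP t\<in>{0..}. \<bar>\<Delta>\<phi> t * deriv f 0\<bar>)
                   < 1 / (8 * (SUP t\<in>{0..T}. spec_norm (H t)))"
    and small2: "\<mu> * (\<bar>\<Delta>\<beta> * deriv f 0\<bar> * \<mu> + \<bar>\<Delta>\<alpha>\<bar>)
                   < 1 / (8 * (SUP t\<in>{0..T}. spec_norm (H t)))"
begin

definition "fd = deriv f 0"
definition "g t = (\<beta> + \<Delta>\<beta>) * \<mu>^2 + \<mu> * (\<phi> t + \<Delta>\<phi> t)"
abbreviation "Fn \<equiv> second_order_sys ((\<alpha> + \<Delta>\<alpha>) * \<mu>) g f"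
definition "S1 = (SUP t\<in>{0..}. \<bar>\<Delta>\<phi> t * deriv f 0\<bar>)"
definition "dd t z = - (\<Delta>\<beta> * fd * \<mu>^2 + \<mu> * (\<Delta>\<phi> t * fd)) * fst z - \<Delta>\<alpha> * \<mu> * snd z
                     - g t * (f (fst z) - fd * fst z)"

lemma Fn_eq: "Fn t z = (snd z, cc t * fst z + ee * snd z + dd t z)"
  by (simp add: second_order_sys_def cc_def ee_def dd_def g_def fd_def algebra_simps)

lemma S1_bdd: "bdd_above ((\<lambda>t. \<bar>\<Delta>\<phi> t * deriv f 0\<bar>) ` {0..})"
proof -
  obtain B where B: "\<And>t. t \<in> {0..} \<Longrightarrow> norm (\<Delta>\<phi> t) \<le> B"
    using \<Delta>\<phi>_bdd unfolding bounded_iff by blast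
  show ?thesis
  proof (rule bdd_aboveI2)
    fix t :: real assume "t \<in> {0..}"
    then have "\<bar>\<Delta>\<phi> t\<bar> \<le> B" using B by simp
    then show "\<bar>\<Delta>\<phi> t * deriv f 0\<bar> \<le> B * \<bar>deriv f 0\<bar>" by (simp add: abs_mult mult_right_mono)
  qed
qed

lemma S1_ge: "t \<ge> 0 \<Longrightarrow> \<bar>\<Delta>\<phi> t * fd\<bar> \<le> S1"
  unfolding S1_def fd_def by (rule cSUP_upper[OF _ S1_bdd]) simp

lemma S1_nonneg: "S1 \<ge> 0"
  using S1_ge[of 0] by simp

lemma hm_pos: "hm > 0"
proof -
  have "0 \<le> \<mu> * S1" using \<mu>pos S1_nonneg by simp
  also have "\<dots> < 1 / (8 * hm)" using small1 unfolding S1_def hm_def .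
  finally have "0 < 1 / (8 * hm)" .
  then show ?thesis by (simp add: zero_less_divide_iff)
qed

lemma small: "2 * hm * ((\<bar>\<Delta>\<beta> * fd\<bar> * \<mu>^2 + \<mu> * S1) + \<bar>\<Delta>\<alpha>\<bar> * \<mu>) < 1 / 2"
proof -
  have a: "\<mu> * S1 < 1 / (8 * hm)" using small1 unfolding S1_def hm_def .
  have b: "\<mu> * (\<bar>\<Delta>\<beta> * fd\<bar> * \<mu> + \<bar>\<Delta>\<alpha>\<bar>) < 1 / (8 * hm)" using small2 unfolding fd_def hm_def .
  have "(\<bar>\<Delta>\<beta> * fd\<bar> * \<mu>^2 + \<mu> * S1) + \<bar>\<Delta>\<alpha>\<bar> * \<mu> < 2 / (8 * hm)"
    using a b by (simp add: power2_eq_square algebra_simps)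
  then have "2 * hm * ((\<bar>\<Delta>\<beta> * fd\<bar> * \<mu>^2 + \<mu> * S1) + \<bar>\<Delta>\<alpha>\<bar> * \<mu>) < 2 * hm * (2 / (8 * hm))"
    using hm_pos by (intro mult_strict_left_mono) auto
  also have "\<dots> = 1 / 2" using hm_pos by simp
  finally show ?thesis .
qed

lemma \<phi>_bound: "\<exists>M. \<forall>t. \<bar>\<phi> t\<bar> \<le> M"
proof -
  have "continuous_on {0..T} \<phi>" using \<phi>_cont by (rule continuous_on_subset) simp
  then have "compact (\<phi> ` {0..T})" by (intro compact_continuous_image compact_Icc)
  then have "bounded (\<phi> ` {0..T})" by (rule compact_imp_bounded)
  then obtain M where M0: "\<forall>x\<in>\<phi> ` {0..T}. norm x \<le> M" unfolding bounded_iff by blast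
  have M: "\<And>s. s \<in> {0..T} \<Longrightarrow> norm (\<phi> s) \<le> M" using M0 by blast
  have "\<bar>\<phi> t\<bar> \<le> M" for t
  proof -
    have pe: "per t = t + of_int (- \<lfloor>t / T\<rfloor>) * T" by (simp add: per_def)
    have "\<phi> (per t) = \<phi> t" unfolding pe by (rule per_int[of \<phi> T t]) (rule \<phi>_per)
    moreover have "per t \<in> {0..T}" using per_range by simp
    ultimately show ?thesis using M[of "per t"] by simp
  qed
  then show ?thesis by blast
qed

lemma g_bound: "\<exists>Gb\<ge>0. \<forall>t\<ge>0. \<bar>g t\<bar> \<le> Gb"
proof -
  obtain M1 where M1: "\<And>t. \<bar>\<phi> t\<bar> \<le> M1" using \<phi>_bound by blast
  obtain M2 where M2: "\<And>t. t \<in> {0..} \<Longrightarrow> norm (\<Delta>\<phi> t) \<le> M2"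
    using \<Delta>\<phi>_bdd unfolding bounded_iff by blast
  define Gb where "Gb = \<bar>\<beta> + \<Delta>\<beta>\<bar> * \<mu>^2 + \<mu> * (M1 + M2)"
  have "\<bar>g t\<bar> \<le> Gb" if "t \<ge> 0" for t
  proof -
    have "\<bar>g t\<bar> \<le> \<bar>(\<beta> + \<Delta>\<beta>) * \<mu>^2\<bar> + \<bar>\<mu> * (\<phi> t + \<Delta>\<phi> t)\<bar>" unfolding g_def by (rule abs_triangle_ineq)
    also have "\<bar>\<mu> * (\<phi> t + \<Delta>\<phi> t)\<bar> \<le> \<mu> * (M1 + M2)"
    proof -
      have "\<bar>\<phi> t + \<Delta>\<phi> t\<bar> \<le> M1 + M2" using M1[of t] M2[of t] that by simp
      then show ?thesis using \<mu>pos by (simp add: abs_mult)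
    qed
    finally show ?thesis by (simp add: Gb_def abs_mult)
  qed
  note gb = this
  have "Gb \<ge> 0" using gb[of 0] by simp
  then show ?thesis using gb by blast
qed

end

context sysN begin

definition "Gb = (SOME G. G \<ge> 0 \<and> (\<forall>t\<ge>0. \<bar>g t\<bar> \<le> G))"

lemma Gb: "Gb \<ge> 0" "\<And>t. t \<ge> 0 \<Longrightarrow> \<bar>g t\<bar> \<le> Gb"
  using someI_ex[OF g_bound] unfolding Gb_def by auto

definition "r0 = min \<rho> (1 / (8 * hm * Gb * p + 1))"

lemma r0: "r0 > 0" "r0 \<le> \<rho>" "8 * hm * Gb * p * r0 \<le> 1"
proof -
  have c: "8 * hm * Gb * p \<ge> 0" using hm_pos Gb p by simp
  then have "0 < 8 * hm * Gb * p + 1" by linarith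
  then show "r0 > 0" using \<rho> by (simp add: r0_def)
  show "r0 \<le> \<rho>" by (simp add: r0_def)
  have "r0 \<le> 1 / (8 * hm * Gb * p + 1)" by (simp add: r0_def)
  then have "8 * hm * Gb * p * r0 \<le> 8 * hm * Gb * p * (1 / (8 * hm * Gb * p + 1))"
    using c by (rule mult_left_mono)
  also have "\<dots> \<le> 1" using c by (simp add: field_simps)
  finally show "8 * hm * Gb * p * r0 \<le> 1" .
qed

lemma dd_bound:
  assumes t: "t \<ge> 0" and n: "norm z \<le> \<rho>"
  shows "\<bar>dd t z\<bar> \<le> ((\<bar>\<Delta>\<beta> * fd\<bar> * \<mu>^2 + \<mu> * S1) + \<bar>\<Delta>\<alpha>\<bar> * \<mu>) * norm z + Gb * p * (norm z)\<^sup>2"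
proof -
  let ?y = "fst z" and ?v = "snd z" and ?n = "norm z"
  have y: "\<bar>?y\<bar> \<le> ?n" and v: "\<bar>?v\<bar> \<le> ?n" by (rule fst_le_norm snd_le_norm)+
  have a: "\<bar>- (\<Delta>\<beta> * fd * \<mu>^2 + \<mu> * (\<Delta>\<phi> t * fd)) * ?y\<bar> \<le> (\<bar>\<Delta>\<beta> * fd\<bar> * \<mu>^2 + \<mu> * S1) * ?n"
  proof -
    have "\<bar>\<Delta>\<beta> * fd * \<mu>^2 + \<mu> * (\<Delta>\<phi> t * fd)\<bar> \<le> \<bar>\<Delta>\<beta> * fd\<bar> * \<mu>^2 + \<mu> * \<bar>\<Delta>\<phi> t * fd\<bar>"
      using \<mu>pos abs_triangle_ineq[of "\<Delta>\<beta> * fd * \<mu>^2" "\<mu> * (\<Delta>\<phi> t * fd)"] by (simp add: abs_mult)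
    also have "\<dots> \<le> \<bar>\<Delta>\<beta> * fd\<bar> * \<mu>^2 + \<mu> * S1" using S1_ge[OF t] \<mu>pos by simp
    finally have 1: "\<bar>\<Delta>\<beta> * fd * \<mu>^2 + \<mu> * (\<Delta>\<phi> t * fd)\<bar> \<le> \<bar>\<Delta>\<beta> * fd\<bar> * \<mu>^2 + \<mu> * S1" .
    have "\<bar>- (\<Delta>\<beta> * fd * \<mu>^2 + \<mu> * (\<Delta>\<phi> t * fd)) * ?y\<bar> = \<bar>\<Delta>\<beta> * fd * \<mu>^2 + \<mu> * (\<Delta>\<phi> t * fd)\<bar> * \<bar>?y\<bar>"
      by (simp only: abs_mult abs_minus_cancel)
    also have "\<dots> \<le> (\<bar>\<Delta>\<beta> * fd\<bar> * \<mu>^2 + \<mu> * S1) * ?n"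
      using 1 y by (intro mult_mono) auto
    finally show ?thesis .
  qed
  have b: "\<bar>\<Delta>\<alpha> * \<mu> * ?v\<bar> \<le> \<bar>\<Delta>\<alpha>\<bar> * \<mu> * ?n"
    using v \<mu>pos by (simp add: abs_mult mult_left_mono)
  have c: "\<bar>g t * (f ?y - fd * ?y)\<bar> \<le> Gb * p * ?n\<^sup>2"
  proof -
    have "\<bar>?y\<bar> \<le> \<rho>" using y n by simp
    then have fq: "\<bar>f ?y - fd * ?y\<bar> \<le> p * ?y\<^sup>2" unfolding fd_def by (rule f_quad)
    have "?y\<^sup>2 \<le> ?n\<^sup>2" using y by (metis abs_ge_zero power2_abs power_mono)
    then have "p * ?y\<^sup>2 \<le> p * ?n\<^sup>2" using p by (rule mult_left_mono)
    with fq have fq2: "\<bar>f ?y - fd * ?y\<bar> \<le> p * ?n\<^sup>2" by simp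
    have "\<bar>g t * (f ?y - fd * ?y)\<bar> = \<bar>g t\<bar> * \<bar>f ?y - fd * ?y\<bar>" by (simp add: abs_mult)
    also have "\<dots> \<le> Gb * (p * ?n\<^sup>2)" using Gb(2)[OF t] fq2 by (intro mult_mono) auto
    finally show ?thesis by simp
  qed
  have "\<bar>dd t z\<bar> \<le> \<bar>- (\<Delta>\<beta> * fd * \<mu>^2 + \<mu> * (\<Delta>\<phi> t * fd)) * ?y\<bar> + \<bar>\<Delta>\<alpha> * \<mu> * ?v\<bar> + \<bar>g t * (f ?y - fd * ?y)\<bar>"
    unfolding dd_def by linarith
  also have "\<dots> \<le> (\<bar>\<Delta>\<beta> * fd\<bar> * \<mu>^2 + \<mu> * S1) * ?n + \<bar>\<Delta>\<alpha>\<bar> * \<mu> * ?n + Gb * p * ?n\<^sup>2"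
    using a b c by linarith
  finally show ?thesis by (simp add: algebra_simps)
qed

lemma Vdec:
  assumes t: "t \<ge> 0" and n: "norm z \<le> r0"
  shows "- (norm z)\<^sup>2 + 2 * (r12 t * fst z + r22 t * snd z) * dd t z \<le> - (norm z)\<^sup>2 / 4"
proof -
  let ?n = "norm z"
  define K where "K = (\<bar>\<Delta>\<beta> * fd\<bar> * \<mu>^2 + \<mu> * S1) + \<bar>\<Delta>\<alpha>\<bar> * \<mu>"
  have K0: "K \<ge> 0" using \<mu>pos S1_nonneg by (simp add: K_def)
  have Ks: "2 * hm * K < 1 / 2" using small by (simp add: K_def)
  have L: "\<bar>r12 t * fst z + r22 t * snd z\<bar> \<le> hm * ?n" by (rule lin_bound)
  have D: "\<bar>dd t z\<bar> \<le> K * ?n + Gb * p * ?n\<^sup>2"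
    unfolding K_def by (rule dd_bound[OF t]) (use n r0 in simp)
  have "(r12 t * fst z + r22 t * snd z) * dd t z \<le> \<bar>r12 t * fst z + r22 t * snd z\<bar> * \<bar>dd t z\<bar>"
    by (metis abs_ge_self abs_mult)
  then have "2 * (r12 t * fst z + r22 t * snd z) * dd t z \<le> 2 * (\<bar>r12 t * fst z + r22 t * snd z\<bar> * \<bar>dd t z\<bar>)"
    by linarith
  also have "\<dots> \<le> 2 * ((hm * ?n) * (K * ?n + Gb * p * ?n\<^sup>2))"
    using L D by (intro mult_left_mono mult_mono) auto
  also have "\<dots> = (2 * hm * K) * ?n\<^sup>2 + (2 * hm * Gb * p * ?n) * ?n\<^sup>2"
    by (simp add: power2_eq_square algebra_simps)
  also have "\<dots> \<le> (1/2) * ?n\<^sup>2 + (1/4) * ?n\<^sup>2"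
  proof (intro add_mono mult_right_mono)
    show "2 * hm * K \<le> 1/2" using Ks by simp
    have "2 * hm * Gb * p * ?n \<le> 2 * hm * Gb * p * r0"
      using n hm_pos Gb p by (intro mult_left_mono) auto
    also have "\<dots> \<le> 1/4" using r0(3) by simp
    finally show "2 * hm * Gb * p * ?n \<le> 1/4" .
  qed auto
  finally show ?thesis by simp
qed

end

lemma trap:
  fixes W N :: "real \<Rightarrow> real"
  assumes ab: "a \<le> b" and cW: "continuous_on {a..b} W" and cN: "continuous_on {a..b} N"
    and m: "m > 0"
    and lower: "\<And>t. t \<in> {a..b} \<Longrightarrow> m * N t \<le> W t"
    and dec: "\<And>s. s \<in> {a..b} \<Longrightarrow> (\<forall>\<tau>\<in>{a..s}. N \<tau> < R) \<Longrightarrow> W s \<le> W a"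
    and iW: "W a < m * R" and iN: "N a < R"
  shows "\<forall>t\<in>{a..b}. N t < R"
proof (rule ccontr)
  assume "\<not> (\<forall>t\<in>{a..b}. N t < R)"
  define A where "A = {a..b} \<inter> N -` {R..}"
  have Ane: "A \<noteq> {}" using \<open>\<not> _\<close> by (auto simp: A_def not_less)
  have Acl: "closed A" unfolding A_def by (rule continuous_closed_preimage[OF cN]) auto
  have Abd: "bdd_below A" unfolding A_def by (rule bdd_belowI[where m=a]) auto
  define t1 where "t1 = Inf A"
  have t1A: "t1 \<in> A" unfolding t1_def by (rule closed_contains_Inf[OF Ane Abd Acl])
  then have t1ab: "t1 \<in> {a..b}" and Nt1: "N t1 \<ge> R" by (auto simp: A_def)
  have below: "N \<tau> < R" if "\<tau> \<in> {a..b}" "\<tau> < t1" for \<tau>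
  proof (rule ccontr)
    assume "\<not> N \<tau> < R"
    then have "\<tau> \<in> A" using that by (auto simp: A_def)
    then have "t1 \<le> \<tau>" unfolding t1_def by (rule cInf_lower[OF _ Abd])
    then show False using that by simp
  qed
  have t1a: "t1 > a"
  proof -
    have "t1 \<noteq> a" using Nt1 iN by auto
    then show ?thesis using t1ab by simp
  qed
  have Ws: "W s \<le> W a" if "s \<in> {a..b}" "s < t1" for s
    using dec[OF that(1)] below that by auto
  have Wt1: "W t1 \<le> W a"
  proof (rule ccontr)
    assume "\<not> W t1 \<le> W a"
    then have e: "W t1 - W a > 0" by simp
    have "continuous (at t1 within {a..b}) W" using cW t1ab continuous_on_eq_continuous_within by blast
    then obtain d where d: "d > 0" and dd: "\<And>s. s \<in> {a..b} \<Longrightarrow> dist s t1 < d \<Longrightarrow> dist (W s) (W t1) < W t1 - W a"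
      using e unfolding continuous_within_eps_delta by blast
    define s where "s = max a (t1 - d / 2)"
    have s1: "s \<in> {a..b}" "s < t1" using t1a t1ab d by (auto simp: s_def)
    have "dist s t1 < d" using t1a d by (auto simp: s_def dist_real_def)
    then have "dist (W s) (W t1) < W t1 - W a" using dd s1 by blast
    then have "W s > W a" by (simp add: dist_real_def)
    then show False using Ws[OF s1] by simp
  qed
  have "m * N t1 \<le> W t1" using lower t1ab by blast
  also have "\<dots> < m * R" using Wt1 iW by simp
  finally have "N t1 < R" using m by simp
  then show False using Nt1 by simp
qed

context sysN begin

lemma V_cont: "continuous_on S x \<Longrightarrow> continuous_on S (\<lambda>t. Q t (x t))"
proof -
  assume "continuous_on S x"
  then have "continuous_on S (\<lambda>t. (t, x t))" by (intro continuous_intros)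
  from continuous_on_compose2[OF Q_cont[of UNIV] this] show ?thesis by simp
qed

lemma stays:
  fixes x :: "real \<Rightarrow> real \<times> real"
  assumes t0: "t0 \<ge> 0" and b: "t0 \<le> b" and xc: "continuous_on {t0..b} x"
    and dx: "\<And>t. t \<in> {t0..b} \<Longrightarrow> norm (x t) < r0 \<Longrightarrow> (x has_vector_derivative Fn t (x t)) (at t within {t0..b})"
    and m: "m > 0" and mQ: "\<And>t z. Q t z \<ge> m * (norm z)\<^sup>2"
    and rr: "0 < rr" "rr \<le> r0"
    and i1: "norm (x t0) < rr" and i2: "Q t0 (x t0) < m * rr\<^sup>2"
  shows "\<forall>t\<in>{t0..b}. norm (x t) < rr"
proof -
  have "\<forall>t\<in>{t0..b}. (norm (x t))\<^sup>2 < rr\<^sup>2"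
  proof (rule trap[OF b V_cont[OF xc] _ m])
    show "continuous_on {t0..b} (\<lambda>t. (norm (x t))\<^sup>2)" by (intro continuous_intros xc)
    show "\<And>t. t \<in> {t0..b} \<Longrightarrow> m * (norm (x t))\<^sup>2 \<le> Q t (x t)" using mQ by blast
    show "Q t0 (x t0) < m * rr\<^sup>2" by (rule i2)
    show "(norm (x t0))\<^sup>2 < rr\<^sup>2" using i1 by (simp add: power_strict_mono)
    fix s assume s: "s \<in> {t0..b}" and hs: "\<forall>\<tau>\<in>{t0..s}. (norm (x \<tau>))\<^sup>2 < rr\<^sup>2"
    show "Q s (x s) \<le> Q t0 (x t0)"
    proof (rule decr_on[where V="\<lambda>t. Q t (x t)"])
      show "t0 \<le> s" using s by simp
      fix \<tau> assume \<tau>: "\<tau> \<in> {t0..s}"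
      have "(norm (x \<tau>))\<^sup>2 < rr\<^sup>2" using hs \<tau> by blast
      then have n: "norm (x \<tau>) < rr" using rr by (simp add: power_less_imp_less_base)
      have \<tau>b: "\<tau> \<in> {t0..b}" using \<tau> s by auto
      have "(x has_vector_derivative Fn \<tau> (x \<tau>)) (at \<tau> within {t0..s})"
        by (rule has_vector_derivative_within_subset[OF dx[OF \<tau>b]]) (use n rr s in auto)
      then have "(x has_vector_derivative (snd (x \<tau>), cc \<tau> * fst (x \<tau>) + ee * snd (x \<tau>) + dd \<tau> (x \<tau>))) (at \<tau> within {t0..s})"
        by (simp add: Fn_eq)
      from Q_deriv[OF this]
      have "((\<lambda>t. Q t (x t)) has_real_derivative
           - (norm (x \<tau>))\<^sup>2 + 2 * (r12 \<tau> * fst (x \<tau>) + r22 \<tau> * snd (x \<tau>)) * dd \<tau> (x \<tau>)) (at \<tau> within {t0..s})" .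
      moreover have "- (norm (x \<tau>))\<^sup>2 + 2 * (r12 \<tau> * fst (x \<tau>) + r22 \<tau> * snd (x \<tau>)) * dd \<tau> (x \<tau>) \<le> 0"
      proof -
        have "- (norm (x \<tau>))\<^sup>2 + 2 * (r12 \<tau> * fst (x \<tau>) + r22 \<tau> * snd (x \<tau>)) * dd \<tau> (x \<tau>) \<le> - (norm (x \<tau>))\<^sup>2 / 4"
          by (rule Vdec) (use \<tau> t0 n rr in auto)
        moreover have "0 \<le> (norm (x \<tau>))\<^sup>2" by simp
        ultimately show ?thesis by linarith
      qed
      ultimately show "\<exists>D. ((\<lambda>t. Q t (x t)) has_real_derivative D) (at \<tau> within {t0..s}) \<and> D \<le> 0" by blast
    qed
  qed
  then show ?thesis using rr by (auto simp: power_less_imp_less_base)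
qed

end

definition clip :: "real \<Rightarrow> real \<Rightarrow> real" where "clip c y = max (- c) (min c y)"

lemma clip_bound: "c \<ge> 0 \<Longrightarrow> \<bar>clip c y\<bar> \<le> c" by (simp add: clip_def)
lemma clip_lip: "\<bar>clip c a - clip c b\<bar> \<le> \<bar>a - b\<bar>" by (simp add: clip_def)
lemma clip_id: "\<bar>y\<bar> \<le> c \<Longrightarrow> clip c y = y" by (simp add: clip_def)

lemma norm_pair_le: "norm (a, b) \<le> \<bar>a\<bar> + \<bar>b\<bar>" for a b :: real
proof -
  have "sqrt (a\<^sup>2 + b\<^sup>2) \<le> \<bar>a\<bar> + \<bar>b\<bar>"
    by (rule real_le_lsqrt) (auto simp: power2_eq_square algebra_simps)
  then show ?thesis by (simp add: norm_Pair)
qed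

context sysN begin

lemma f_diff: "f differentiable (at x)" using f_smooth[of 0 x] by simp

lemma f_cont: "continuous_on S f"
  by (meson continuous_at_imp_continuous_on differentiable_imp_continuous_within f_diff)

lemma df_cont: "continuous_on S (deriv f)"
  using f_smooth[of 1] by (simp add: continuous_at_imp_continuous_on differentiable_imp_continuous_within)

lemma f_lip: "\<exists>L\<ge>0. \<forall>a b. \<bar>a\<bar> \<le> c \<longrightarrow> \<bar>b\<bar> \<le> c \<longrightarrow> \<bar>f a - f b\<bar> \<le> L * \<bar>a - b\<bar>"
proof -
  have "compact (deriv f ` {-c..c})" by (intro compact_continuous_image df_cont compact_Icc)
  then have "bounded (deriv f ` {-c..c})" by (rule compact_imp_bounded)
  then obtain L0 where L0: "\<forall>y\<in>deriv f ` {-c..c}. norm y \<le> L0" unfolding bounded_iff by blast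
  define L where "L = max L0 0"
  have L: "\<And>z. z \<in> {-c..c} \<Longrightarrow> \<bar>deriv f z\<bar> \<le> L" using L0 by (force simp: L_def)
  have lt: "\<bar>f b - f a\<bar> \<le> L * \<bar>b - a\<bar>" if ab: "a < b" "\<bar>a\<bar> \<le> c" "\<bar>b\<bar> \<le> c" for a b
  proof -
    obtain l z where z: "a < z" "z < b" and dz: "DERIV f z :> l" and eq: "f b - f a = (b - a) * l"
      using MVT[OF ab(1) f_cont] f_diff by blast
    have "l = deriv f z" using dz by (simp add: DERIV_imp_deriv)
    moreover have "z \<in> {-c..c}" using z ab by auto
    ultimately have "\<bar>l\<bar> \<le> L" using L by simp
    then show ?thesis using eq ab by (simp add: abs_mult mult.commute mult_left_mono)
  qed
  have "\<bar>f a - f b\<bar> \<le> L * \<bar>a - b\<bar>" if "\<bar>a\<bar> \<le> c" "\<bar>b\<bar> \<le> c" for a b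
  proof (cases a b rule: linorder_cases)
    case less then show ?thesis using lt[of a b] that by (simp add: abs_minus_commute)
  next
    case equal then show ?thesis by simp
  next
    case greater then show ?thesis using lt[of b a] that by simp
  qed
  moreover have "L \<ge> 0" by (simp add: L_def)
  ultimately show ?thesis by blast
qed

definition Gt :: "real \<Rightarrow> real \<times> real \<Rightarrow> real \<times> real" where "Gt t z = (clip r0 (snd z), - ((\<alpha> + \<Delta>\<alpha>) * \<mu>) * clip r0 (snd z) - g t * f (clip r0 (fst z)))"

lemma Gt_eq: "norm z \<le> r0 \<Longrightarrow> Gt t z = Fn t z"
  using fst_le_norm[of z] snd_le_norm[of z]
  by (simp add: Gt_def second_order_sys_def clip_id)

lemma g_cont: "t0 \<ge> 0 \<Longrightarrow> continuous_on {t0..} g"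
  unfolding g_def
  by (intro continuous_intros continuous_on_subset[OF \<phi>_cont] continuous_on_subset[OF \<Delta>\<phi>_cont]) auto

lemma exist_sol:
  assumes t0: "t0 \<ge> 0" and m: "m > 0" and mQ: "\<And>t z. Q t z \<ge> m * (norm z)\<^sup>2"
    and rr: "0 < rr" "rr \<le> r0"
    and i1: "norm x0 < rr" and i2: "Q t0 x0 < m * rr\<^sup>2"
  shows "\<exists>x. is_solution_on Fn {t0..} x \<and> x t0 = x0"
proof -
  obtain L where L0: "L \<ge> 0" and L: "\<And>a b. \<bar>a\<bar> \<le> r0 \<Longrightarrow> \<bar>b\<bar> \<le> r0 \<Longrightarrow> \<bar>f a - f b\<bar> \<le> L * \<bar>a - b\<bar>"
    using f_lip[of r0] by blast
  define A where "A = (\<alpha> + \<Delta>\<alpha>) * \<mu>"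
  define K where "K = 1 + \<bar>A\<bar> + Gb * L"
  define B where "B = r0 + \<bar>A\<bar> * r0 + Gb * (\<bar>f 0\<bar> + L * r0)"
  have r00: "r0 \<ge> 0" using r0 by simp
  have Kpos: "K > 0" using Gb L0 by (simp add: K_def add_pos_nonneg)
  have B0: "B \<ge> 0" using Gb L0 r00 by (simp add: B_def)
  have "\<exists>x. is_solution_on Gt {t0..} x \<and> x t0 = x0"
  proof (rule picard_exists[OF Kpos B0])
    fix z show "continuous_on {t0..} (\<lambda>t. Gt t z)"
      unfolding Gt_def by (intro continuous_intros g_cont t0)
  next
    fix t and z w :: "real \<times> real" assume t: "t0 \<le> t"
    have gt: "\<bar>g t\<bar> \<le> Gb" using Gb(2) t t0 by simp
    let ?cy = "clip r0 (fst z)" and ?cy' = "clip r0 (fst w)"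
    let ?cv = "clip r0 (snd z)" and ?cv' = "clip r0 (snd w)"
    have yv: "\<bar>fst z - fst w\<bar> \<le> norm (z - w)" "\<bar>snd z - snd w\<bar> \<le> norm (z - w)"
      using fst_le_norm[of "z - w"] snd_le_norm[of "z - w"] by auto
    have c1: "\<bar>?cv - ?cv'\<bar> \<le> norm (z - w)" using clip_lip[of r0 "snd z" "snd w"] yv(2) by linarith
    have c2: "\<bar>?cy - ?cy'\<bar> \<le> norm (z - w)" using clip_lip[of r0 "fst z" "fst w"] yv(1) by linarith
    have "\<bar>f ?cy - f ?cy'\<bar> \<le> L * \<bar>?cy - ?cy'\<bar>" by (rule L[OF clip_bound[OF r00] clip_bound[OF r00]])
    also have "\<dots> \<le> L * norm (z - w)" by (rule mult_left_mono[OF c2 L0])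
    finally have fl: "\<bar>f ?cy - f ?cy'\<bar> \<le> L * norm (z - w)" .
    have "\<bar>(- A * ?cv - g t * f ?cy) - (- A * ?cv' - g t * f ?cy')\<bar> \<le> \<bar>A\<bar> * \<bar>?cv - ?cv'\<bar> + \<bar>g t\<bar> * \<bar>f ?cy - f ?cy'\<bar>"
    proof -
      have "(- A * ?cv - g t * f ?cy) - (- A * ?cv' - g t * f ?cy') = - (A * (?cv - ?cv')) - g t * (f ?cy - f ?cy')"
        by (simp add: algebra_simps)
      then show ?thesis by (simp add: abs_mult[symmetric] abs_triangle_ineq4)
    qed
    also have "\<dots> \<le> \<bar>A\<bar> * norm (z - w) + Gb * (L * norm (z - w))"
      using c1 fl gt by (intro add_mono mult_mono) auto
    finally have s2: "\<bar>(- A * ?cv - g t * f ?cy) - (- A * ?cv' - g t * f ?cy')\<bar> \<le> (\<bar>A\<bar> + Gb * L) * norm (z - w)"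
      by (simp add: algebra_simps)
    have "norm (Gt t z - Gt t w) \<le> \<bar>?cv - ?cv'\<bar> + \<bar>(- A * ?cv - g t * f ?cy) - (- A * ?cv' - g t * f ?cy')\<bar>"
      unfolding Gt_def A_def by (simp add: norm_pair_le)
    also have "\<dots> \<le> norm (z - w) + (\<bar>A\<bar> + Gb * L) * norm (z - w)" using c1 s2 by simp
    finally show "norm (Gt t z - Gt t w) \<le> K * norm (z - w)" by (simp add: K_def algebra_simps)
  next
    fix t and z :: "real \<times> real" assume t: "t0 \<le> t"
    have gt: "\<bar>g t\<bar> \<le> Gb" using Gb(2) t t0 by simp
    have cv: "\<bar>clip r0 (snd z)\<bar> \<le> r0" by (rule clip_bound[OF r00])
    have cy: "\<bar>clip r0 (fst z)\<bar> \<le> r0" by (rule clip_bound[OF r00])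
    have "\<bar>f (clip r0 (fst z)) - f 0\<bar> \<le> L * \<bar>clip r0 (fst z) - 0\<bar>" using L[OF cy, of 0] r00 by simp
    also have "\<dots> \<le> L * r0" using cy L0 by (simp add: mult_left_mono)
    finally have fb: "\<bar>f (clip r0 (fst z))\<bar> \<le> \<bar>f 0\<bar> + L * r0" by linarith
    have "\<bar>- A * clip r0 (snd z) - g t * f (clip r0 (fst z))\<bar> \<le> \<bar>A\<bar> * \<bar>clip r0 (snd z)\<bar> + \<bar>g t\<bar> * \<bar>f (clip r0 (fst z))\<bar>"
      by (simp add: abs_mult[symmetric] abs_triangle_ineq4)
    also have "\<dots> \<le> \<bar>A\<bar> * r0 + Gb * (\<bar>f 0\<bar> + L * r0)"
      using cv fb gt by (intro add_mono mult_mono) auto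
    finally have s2: "\<bar>- A * clip r0 (snd z) - g t * f (clip r0 (fst z))\<bar> \<le> \<bar>A\<bar> * r0 + Gb * (\<bar>f 0\<bar> + L * r0)" .
    have "norm (Gt t z) \<le> \<bar>clip r0 (snd z)\<bar> + \<bar>- A * clip r0 (snd z) - g t * f (clip r0 (fst z))\<bar>"
      unfolding Gt_def A_def by (rule norm_pair_le)
    also have "\<dots> \<le> B" using cv s2 by (simp add: B_def)
    finally show "norm (Gt t z) \<le> B" .
  qed
  then obtain x where sol: "is_solution_on Gt {t0..} x" and x0: "x t0 = x0" by blast
  have dG: "(x has_vector_derivative Gt t (x t)) (at t within {t0..})" if "t \<ge> t0" for t
    using sol that unfolding is_solution_on_def by auto
  have small: "norm (x t) < rr" if t: "t \<ge> t0" for t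
  proof -
    have xc0: "continuous_on {t0..} x"
      unfolding continuous_on_eq_continuous_within
    proof
      fix s assume "s \<in> {t0..}"
      then show "continuous (at s within {t0..}) x" using dG[of s] by (auto intro: has_vector_derivative_continuous)
    qed
    have xc: "continuous_on {t0..t} x" by (rule continuous_on_subset[OF xc0]) auto
    have "\<forall>s\<in>{t0..t}. norm (x s) < rr"
    proof (rule stays[OF t0 t xc _ m mQ rr])
      fix s assume s: "s \<in> {t0..t}" "norm (x s) < r0"
      have "(x has_vector_derivative Gt s (x s)) (at s within {t0..t})"
        by (rule has_vector_derivative_within_subset[OF dG]) (use s in auto)
      then show "(x has_vector_derivative Fn s (x s)) (at s within {t0..t})"
        using Gt_eq[of "x s" s] s by simp
    qed (use i1 i2 x0 in auto)
    then show ?thesis using t by auto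
  qed
  have "is_solution_on Fn {t0..} x"
    unfolding is_solution_on_def
  proof
    fix t assume "t \<in> {t0..}"
    then have t: "t \<ge> t0" by simp
    have "Gt t (x t) = Fn t (x t)" using small[OF t] rr by (intro Gt_eq) simp
    then show "(x has_vector_derivative Fn t (x t)) (at t within {t0..})" using dG[OF t] by simp
  qed
  then show ?thesis using x0 by blast
qed

end

lemma delta_choice:
  fixes m h rr :: real
  assumes "m > 0" "h > 0" "rr > 0"
  shows "\<exists>\<delta>>0. \<delta> \<le> rr \<and> h * \<delta>\<^sup>2 < m * rr\<^sup>2"
proof -
  define s where "s = sqrt (m / (2 * h))"
  have s0: "s > 0" using assms by (simp add: s_def)
  define \<delta> where "\<delta> = min rr (s * rr)"
  have d0: "\<delta> > 0" using s0 assms by (simp add: \<delta>_def)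
  have "\<delta>\<^sup>2 \<le> (s * rr)\<^sup>2" using d0 by (intro power_mono) (auto simp: \<delta>_def)
  also have "\<dots> = m / (2 * h) * rr\<^sup>2" using assms by (simp add: s_def power_mult_distrib)
  finally have "h * \<delta>\<^sup>2 \<le> h * (m / (2 * h) * rr\<^sup>2)" using assms by (intro mult_left_mono) auto
  also have "\<dots> = m * rr\<^sup>2 / 2" using assms by (simp add: field_simps)
  also have "\<dots> < m * rr\<^sup>2" using assms by simp
  finally show ?thesis using d0 by (intro exI[of _ \<delta>]) (auto simp: \<delta>_def)
qed

context sysN begin

lemma sol_cont:
  assumes "is_solution_on F S x" shows "continuous_on S x"
  unfolding continuous_on_eq_continuous_within
proof
  fix t assume "t \<in> S"
  then show "continuous (at t within S) x"
    using assms unfolding is_solution_on_def by (auto intro: has_vector_derivative_continuous)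
qed

lemma trapped:
  assumes t0: "t0 \<ge> 0" and m: "m > 0" and mQ: "\<And>t z. Q t z \<ge> m * (norm z)\<^sup>2"
    and rr: "0 < rr" "rr \<le> r0" and d: "\<delta> \<le> rr" "hm * \<delta>\<^sup>2 < m * rr\<^sup>2"
    and b: "t0 \<le> b" and sol: "is_solution_on Fn {t0..b} x" and n: "norm (x t0) < \<delta>"
  shows "\<forall>t\<in>{t0..b}. norm (x t) < rr"
proof (rule stays[OF t0 b sol_cont[OF sol] _ m mQ rr])
  fix t assume "t \<in> {t0..b}"
  then show "(x has_vector_derivative Fn t (x t)) (at t within {t0..b})"
    using sol unfolding is_solution_on_def by blast
next
  show "norm (x t0) < rr" using n d by simp
  have "Q t0 (x t0) \<le> hm * (norm (x t0))\<^sup>2" using Q_bound[of t0 "x t0"] by simp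
  also have "\<dots> \<le> hm * \<delta>\<^sup>2" using n hm_pos by (intro mult_left_mono power_mono) auto
  also have "\<dots> < m * rr\<^sup>2" by (rule d)
  finally show "Q t0 (x t0) < m * rr\<^sup>2" .
qed

lemma stable: "lyap_stable Fn"
  unfolding lyap_stable_def
proof (intro allI impI)
  fix \<epsilon> t0 :: real assume e: "\<epsilon> > 0" and t0: "t0 \<ge> 0"
  obtain m where m: "m > 0" and mQ: "\<And>t z. Q t z \<ge> m * (norm z)\<^sup>2" using Q_unif by blast
  define rr where "rr = min \<epsilon> r0"
  have rr: "0 < rr" "rr \<le> r0" "rr \<le> \<epsilon>" using e r0 by (auto simp: rr_def)
  obtain \<delta> where d0: "\<delta> > 0" and d: "\<delta> \<le> rr" "hm * \<delta>\<^sup>2 < m * rr\<^sup>2"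
    using delta_choice[OF m hm_pos rr(1)] by blast
  have "\<forall>x0. norm x0 < \<delta> \<longrightarrow>
        (\<exists>x. is_solution_on Fn {t0..} x \<and> x t0 = x0) \<and>
        (\<forall>b x. t0 \<le> b \<longrightarrow> is_solution_on Fn {t0..b} x \<longrightarrow> x t0 = x0 \<longrightarrow>
               (\<forall>t\<in>{t0..b}. norm (x t) < \<epsilon>))"
  proof (intro allI impI conjI)
    fix x0 :: "real \<times> real" assume n: "norm x0 < \<delta>"
    show "\<exists>x. is_solution_on Fn {t0..} x \<and> x t0 = x0"
    proof (rule exist_sol[OF t0 m mQ rr(1,2)])
      show "norm x0 < rr" using n d by simp
      have "Q t0 x0 \<le> hm * (norm x0)\<^sup>2" using Q_bound[of t0 x0] by simp
      also have "\<dots> \<le> hm * \<delta>\<^sup>2" using n hm_pos by (intro mult_left_mono power_mono) auto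
      also have "\<dots> < m * rr\<^sup>2" by (rule d)
      finally show "Q t0 x0 < m * rr\<^sup>2" .
    qed
    fix b x assume b: "t0 \<le> b" and sol: "is_solution_on Fn {t0..b} x" and x0: "x t0 = x0"
    have "\<forall>t\<in>{t0..b}. norm (x t) < rr"
      by (rule trapped[OF t0 m mQ rr(1,2) d b sol]) (use n x0 in simp)
    then show "\<forall>t\<in>{t0..b}. norm (x t) < \<epsilon>" using rr by force
  qed
  then show "\<exists>\<delta>>0. \<forall>x0. norm x0 < \<delta> \<longrightarrow>
        (\<exists>x. is_solution_on Fn {t0..} x \<and> x t0 = x0) \<and>
        (\<forall>b x. t0 \<le> b \<longrightarrow> is_solution_on Fn {t0..b} x \<longrightarrow> x t0 = x0 \<longrightarrow>
               (\<forall>t\<in>{t0..b}. norm (x t) < \<epsilon>))" using d0 by blast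
qed

lemma attractive: "lyap_attractive Fn"
  unfolding lyap_attractive_def
proof (intro allI impI)
  fix t0 :: real assume t0: "t0 \<ge> 0"
  obtain m where m: "m > 0" and mQ: "\<And>t z. Q t z \<ge> m * (norm z)\<^sup>2" using Q_unif by blast
  have rr: "0 < r0" "r0 \<le> r0" using r0 by auto
  obtain \<delta> where d0: "\<delta> > 0" and d: "\<delta> \<le> r0" "hm * \<delta>\<^sup>2 < m * r0\<^sup>2"
    using delta_choice[OF m hm_pos rr(1)] by blast
  define lam where "lam = 1 / (4 * hm)"
  have l0: "lam > 0" using hm_pos by (simp add: lam_def)
  have "\<forall>x. is_solution_on Fn {t0..} x \<longrightarrow> norm (x t0) < \<delta> \<longrightarrow> (x \<longlongrightarrow> 0) at_top"
  proof (intro allI impI)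
    fix x assume sol: "is_solution_on Fn {t0..} x" and n: "norm (x t0) < \<delta>"
    have dx: "(x has_vector_derivative Fn t (x t)) (at t within {t0..})" if "t \<ge> t0" for t
      using sol that unfolding is_solution_on_def by auto
    have small: "norm (x t) < r0" if t: "t \<ge> t0" for t
    proof -
      have "is_solution_on Fn {t0..t} x"
        unfolding is_solution_on_def
      proof
        fix s assume s: "s \<in> {t0..t}"
        show "(x has_vector_derivative Fn s (x s)) (at s within {t0..t})"
          by (rule has_vector_derivative_within_subset[OF dx]) (use s in auto)
      qed
      from trapped[OF t0 m mQ rr d t this n] show ?thesis using t by auto
    qed
    define V0 where "V0 = Q t0 (x t0)"
    have "Q t0 (x t0) \<ge> m * (norm (x t0))\<^sup>2" by (rule mQ)
    moreover have "m * (norm (x t0))\<^sup>2 \<ge> 0" using m by simp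
    ultimately have V0: "V0 \<ge> 0" unfolding V0_def by linarith
    have decay: "m * (norm (x t))\<^sup>2 * (1 + lam * (t - t0)) \<le> V0" if t: "t \<ge> t0" for t
    proof -
      let ?W = "\<lambda>s. Q s (x s) * exp (lam * (s - t0))"
      have "?W t \<le> ?W t0"
      proof (rule decr_on[where V="?W"])
        show "t0 \<le> t" by (rule t)
        fix s assume s: "s \<in> {t0..t}"
        have "(x has_vector_derivative Fn s (x s)) (at s within {t0..t})"
          by (rule has_vector_derivative_within_subset[OF dx]) (use s in auto)
        then have "(x has_vector_derivative (snd (x s), cc s * fst (x s) + ee * snd (x s) + dd s (x s))) (at s within {t0..t})"
          by (simp add: Fn_eq)
        note dV = Q_deriv[OF this]
        have dE: "((\<lambda>s. exp (lam * (s - t0))) has_real_derivative exp (lam * (s - t0)) * (lam * (1 - 0))) (at s within {t0..t})"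
          by (intro DERIV_chain2[OF DERIV_exp] DERIV_cmult DERIV_diff DERIV_ident DERIV_const)
        let ?D = "(- (norm (x s))\<^sup>2 + 2 * (r12 s * fst (x s) + r22 s * snd (x s)) * dd s (x s)) * exp (lam * (s - t0))
                  + exp (lam * (s - t0)) * (lam * (1 - 0)) * Q s (x s)"
        have "(?W has_real_derivative ?D) (at s within {t0..t})"
          by (rule DERIV_mult[OF dV dE])
        moreover have "?D \<le> 0"
        proof -
          have s0: "s \<ge> 0" "norm (x s) \<le> r0" using s t0 small[of s] by auto
          have a: "- (norm (x s))\<^sup>2 + 2 * (r12 s * fst (x s) + r22 s * snd (x s)) * dd s (x s) \<le> - (norm (x s))\<^sup>2 / 4"
            by (rule Vdec[OF s0])
          have "Q s (x s) \<le> hm * (norm (x s))\<^sup>2" using Q_bound[of s "x s"] by simp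
          then have b: "lam * Q s (x s) \<le> (norm (x s))\<^sup>2 / 4"
            using l0 hm_pos by (simp add: lam_def field_simps)
          have "?D = exp (lam * (s - t0)) * ((- (norm (x s))\<^sup>2 + 2 * (r12 s * fst (x s) + r22 s * snd (x s)) * dd s (x s)) + lam * Q s (x s))"
            by (simp add: algebra_simps)
          also have "\<dots> \<le> exp (lam * (s - t0)) * 0"
            using a b by (intro mult_left_mono) auto
          finally show ?thesis by simp
        qed
        ultimately show "\<exists>D. (?W has_real_derivative D) (at s within {t0..t}) \<and> D \<le> 0" by blast
      qed
      then have W: "Q t (x t) * exp (lam * (t - t0)) \<le> V0" by (simp add: V0_def)
      have "1 + lam * (t - t0) \<le> exp (lam * (t - t0))" by (rule exp_ge_add_one_self)
      moreover have "1 + lam * (t - t0) \<ge> 0" using l0 t by simp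
      moreover have "Q t (x t) \<ge> m * (norm (x t))\<^sup>2" by (rule mQ)
      moreover have "m * (norm (x t))\<^sup>2 \<ge> 0" using m by simp
      ultimately have "m * (norm (x t))\<^sup>2 * (1 + lam * (t - t0)) \<le> Q t (x t) * exp (lam * (t - t0))"
        by (intro mult_mono) auto
      then show ?thesis using W by simp
    qed
    show "(x \<longlongrightarrow> 0) at_top"
    proof (rule tendstoI)
      fix e :: real assume e: "e > 0"
      define N where "N = t0 + V0 / (m * e\<^sup>2 * lam)"
      have "norm (x t) < e" if t: "t \<ge> N" for t
      proof -
        have me: "m * e\<^sup>2 > 0" using m e by simp
        have "V0 / (m * e\<^sup>2 * lam) \<ge> 0" using V0 me l0 by simp
        then have tt0: "t \<ge> t0" using t by (simp add: N_def)
        have "t - t0 \<ge> V0 / (m * e\<^sup>2 * lam)" using t by (simp add: N_def)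
        then have "lam * (t - t0) \<ge> lam * (V0 / (m * e\<^sup>2 * lam))" using l0 by (intro mult_left_mono) auto
        also have "lam * (V0 / (m * e\<^sup>2 * lam)) = V0 / (m * e\<^sup>2)" using l0 me by (simp add: field_simps)
        finally have "1 + lam * (t - t0) > V0 / (m * e\<^sup>2)" by simp
        then have "V0 < (1 + lam * (t - t0)) * (m * e\<^sup>2)" by (subst (asm) pos_divide_less_eq[OF me])
        then have "m * e\<^sup>2 * (1 + lam * (t - t0)) > V0" by (simp only: mult.commute)
        moreover have "m * (norm (x t))\<^sup>2 * (1 + lam * (t - t0)) \<le> V0" by (rule decay[OF tt0])
        ultimately have "m * (norm (x t))\<^sup>2 * (1 + lam * (t - t0)) < m * e\<^sup>2 * (1 + lam * (t - t0))" by simp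
        moreover have "1 + lam * (t - t0) > 0" using l0 tt0 by (simp add: add_pos_nonneg)
        ultimately have "(norm (x t))\<^sup>2 < e\<^sup>2" using m by simp
        then show ?thesis using e by (simp add: power_less_imp_less_base)
      qed
      then show "\<forall>\<^sub>F t in at_top. dist (x t) 0 < e"
        unfolding eventually_at_top_linorder by auto
    qed
  qed
  then show "\<exists>\<delta>>0. \<forall>x. is_solution_on Fn {t0..} x \<longrightarrow> norm (x t0) < \<delta> \<longrightarrow> (x \<longlongrightarrow> 0) at_top"
    using d0 by blast
qed

lemma asymp: "asymp_stable Fn"
  unfolding asymp_stable_def using stable attractive by blast

end

theorem mainTheorem8:
  fixes T \<alpha> \<beta> \<mu>0 \<mu> p \<rho> \<Delta>\<alpha> \<Delta>\<beta> :: real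
    and \<phi> f \<Delta>\<phi> :: "real \<Rightarrow> real"
    and H :: "real \<Rightarrow> complex^2^2"
  assumes T: "T > 0" and \<alpha>: "\<alpha> > 0" and \<beta>: "\<beta> > 0"
    and \<phi>_cont: "continuous_on UNIV \<phi>"
    and \<phi>_per: "\<And>t. \<phi> (t + T) = \<phi> t"
    and \<phi>_mean: "integral {0..T} \<phi> = 0"
    and f_smooth: "\<And>n x. ((deriv ^^ n) f) differentiable (at x)"
    and f0: "f 0 = 0" and f'0: "deriv f 0 < 0"
    and cond: "(1 / T) * integral {0..T} (\<lambda>\<tau>. (integral {0..\<tau>} (\<lambda>s. \<phi> s * deriv f 0))\<^sup>2)
               > ((1 / T) * integral {0..T} (\<lambda>\<tau>. \<tau> * (\<phi> \<tau> * deriv f 0)))\<^sup>2 - \<beta> * deriv f 0"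
    and \<mu>0: "\<mu>0 > 0"
    and lin_stable: "\<And>\<nu>. 0 < \<nu> \<Longrightarrow> \<nu> \<le> \<mu>0 \<Longrightarrow>
        asymp_stable (second_order_sys (\<alpha> * \<nu>)
           (\<lambda>t. \<beta> * deriv f 0 * \<nu>^2 + \<nu> * (\<phi> t * deriv f 0)) (\<lambda>y. y))"
    and \<mu>: "0 < \<mu>" "\<mu> \<le> \<mu>0"
    and H_herm: "\<And>t. t \<in> {0..T} \<Longrightarrow> hermitian2 (H t)"
    and H_ode: "\<And>t. t \<in> {0..T} \<Longrightarrow>
        (H has_vector_derivative
           (- mat 1 - H t ** Atilde \<alpha> (\<beta> * deriv f 0) (\<lambda>s. \<phi> s * deriv f 0) \<mu> t
            - adjoint2 (Atilde \<alpha> (\<beta> * deriv f 0) (\<lambda>s. \<phi> s * deriv f 0) \<mu> t) ** H t))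
        (at t within {0..T})"
    and H_per: "H 0 = H T" and H_pos: "posdef2 (H 0)"
    and \<Delta>\<phi>_cont: "continuous_on {0..} \<Delta>\<phi>" and \<Delta>\<phi>_bdd: "bounded (\<Delta>\<phi> ` {0..})"
    and p: "p \<ge> 0" and \<rho>: "\<rho> > 0"
    and f_quad: "\<And>\<xi>. \<bar>\<xi>\<bar> \<le> \<rho> \<Longrightarrow> \<bar>f \<xi> - deriv f 0 * \<xi>\<bar> \<le> p * \<xi>\<^sup>2"
    and small1: "\<mu> * (SUP t\<in>{0..}. \<bar>\<Delta>\<phi> t * deriv f 0\<bar>)
                   < 1 / (8 * (SUP t\<in>{0..T}. spec_norm (H t)))"
    and small2: "\<mu> * (\<bar>\<Delta>\<beta> * deriv f 0\<bar> * \<mu> + \<bar>\<Delta>\<alpha>\<bar>)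
                   < 1 / (8 * (SUP t\<in>{0..T}. spec_norm (H t)))"
  shows "asymp_stable (second_order_sys ((\<alpha> + \<Delta>\<alpha>) * \<mu>)
           (\<lambda>t. (\<beta> + \<Delta>\<beta>) * \<mu>^2 + \<mu> * (\<phi> t + \<Delta>\<phi> t)) f)"
proof -
  interpret sysN T \<alpha> \<beta> \<mu> \<phi> f H p \<rho> \<Delta>\<alpha> \<Delta>\<beta> \<Delta>\<phi>
  proof (unfold_locales)
    show "asymp_stable (second_order_sys (\<alpha> * \<mu>)
           (\<lambda>t. \<beta> * deriv f 0 * \<mu>^2 + \<mu> * (\<phi> t * deriv f 0)) (\<lambda>y. y))"
      using lin_stable \<mu> by blast
  qed (use assms in auto)
  have e: "g = (\<lambda>t. (\<beta> + \<Delta>\<beta>) * \<mu>^2 + \<mu> * (\<phi> t + \<Delta>\<phi> t))" by (rule ext) (simp add: g_def)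
  show ?thesis using asymp unfolding e .
qed

end
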